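(* There exist absolute constants $C, C'>0$ such that the following holds. Let $n,d\ge 1$, let $\alpha\in(0,1]$ and let $\eta\in\mathbb R^n$ be a deterministic vector with $|\{i\in[n]: |\eta_i|\le 1\}|\ge \alpha n$. Let $\mathbf X\in\mathbb R^{n\times d}$ have i.i.d. entries $\mathbf X_{ij}\sim N(0,1)$. Let $\delta\in(0,1)$ and suppose $n\ge C\cdot \frac{d+\ln(2/\delta)}{\alpha^2}$. Then with probability at least $1-\delta$ over $\mathbf X$, simultaneously for every $\beta^*\in\mathbb R^d$ the following holds: with $\mathbf y=\mathbf X\beta^*+\eta$, every minimizer $\hat\beta$ of the Huber loss $f(\beta)=\frac1n\sum_{i=1}^n\Phi\big((\mathbf X\beta-\mathbf y)_i\big)$ satisfies \[\|\beta^*-\hat\beta\|^2\le C'\cdot\frac{d+\ln(2/\delta)}{\alpha^2 n}.\]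
   Context: The Huber penalty $\Phi:\mathbb R\to\mathbb R_{\ge0}$ is $\Phi(t)=\tfrac12 t^2$ if $|t|\le 2$ and $\Phi(t)=2|t|-2$ otherwise. $\|\cdot\|$ is the Euclidean norm. *)

theory Defs
  imports "HOL-Probability.Probability"
begin

definition huber :: "real \<Rightarrow> real" where
  "huber t = (if \<bar>t\<bar> \<le> 2 then t\<^sup>2 / 2 else 2 * \<bar>t\<bar> - 2)"

definition gauss_matrix :: "nat \<Rightarrow> nat \<Rightarrow> (nat \<times> nat \<Rightarrow> real) measure" where
  "gauss_matrix n d = PiM ({..<n} \<times> {..<d}) (\<lambda>_. density lborel std_normal_density)"

text \<open>Huber loss f(beta) = (1/n) sum_i Phi((X beta - y)_i); vectors in R^d are
  functions nat => real of which only the components j < d are used.\<close>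
definition huber_loss :: "nat \<Rightarrow> nat \<Rightarrow> (nat \<times> nat \<Rightarrow> real) \<Rightarrow> (nat \<Rightarrow> real) \<Rightarrow> (nat \<Rightarrow> real) \<Rightarrow> real" where
  "huber_loss n d X y \<beta> = (1 / real n) * (\<Sum>i<n. huber ((\<Sum>j<d. X (i, j) * \<beta> j) - y i))"

end

theory Submission
  imports Defs
begin
abbreviation "NG \<equiv> density lborel std_normal_density"

lemma prob_NG: "prob_space NG"
  using prob_space_normal_density[of 1 0] by simp

lemma exp_std_eq: "std_normal_density x * exp (a * x) = exp (a\<^sup>2/2) * normal_density a 1 x"
  unfolding normal_density_def
  by (simp add: exp_add[symmetric] power2_eq_square algebra_simps diff_divide_distrib add_divide_distrib)

lemma gauss_mgf_integrable: "integrable NG (\<lambda>x. exp (a * x))"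
  by (subst integrable_density) (auto simp: exp_std_eq)

lemma gauss_mgf: "(\<integral>x. exp (a * x) \<partial>NG) = exp (a\<^sup>2/2)"
  by (subst integral_density) (auto simp: exp_std_eq)

lemma gm_eq: "gauss_matrix n d = PiM ({..<n} \<times> {..<d}) (\<lambda>_. NG)"
  by (simp add: gauss_matrix_def)

lemma prob_PiNG: "prob_space (PiM K (\<lambda>_. NG))"
proof -
  interpret product_prob_space "\<lambda>_. NG" K
    by (simp add: product_prob_space_def product_prob_space_axioms_def product_sigma_finite_def prob_NG prob_space_imp_sigma_finite)
  show ?thesis by (rule P.prob_space_axioms)
qed

lemma lin_mgf:
  assumes fin: "finite K"
  shows "integrable (PiM K (\<lambda>_. NG)) (\<lambda>x. exp (l * (\<Sum>k\<in>K. c k * x k)))"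
    and "(\<integral>x. exp (l * (\<Sum>k\<in>K. c k * x k)) \<partial>PiM K (\<lambda>_. NG)) = exp (l\<^sup>2 * (\<Sum>k\<in>K. (c k)\<^sup>2) / 2)"
proof -
  interpret product_prob_space "\<lambda>_. NG" K
    by (simp add: product_prob_space_def product_prob_space_axioms_def product_sigma_finite_def prob_NG prob_space_imp_sigma_finite)
  have eq: "(\<lambda>x. exp (l * (\<Sum>k\<in>K. c k * x k))) = (\<lambda>x. \<Prod>k\<in>K. (\<lambda>y. exp ((l * c k) * y)) (x k))"
    by (auto simp: sum_distrib_left exp_sum[OF fin] mult.assoc)
  show "integrable (PiM K (\<lambda>_. NG)) (\<lambda>x. exp (l * (\<Sum>k\<in>K. c k * x k)))"
    unfolding eq by (rule product_integrable_prod[OF fin]) (rule gauss_mgf_integrable)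
  have "(\<integral>x. exp (l * (\<Sum>k\<in>K. c k * x k)) \<partial>PiM K (\<lambda>_. NG)) = (\<Prod>k\<in>K. exp ((l * c k)\<^sup>2/2))"
    unfolding eq by (subst product_integral_prod[OF fin]) (auto intro: gauss_mgf_integrable simp: gauss_mgf)
  also have "\<dots> = exp (l\<^sup>2 * (\<Sum>k\<in>K. (c k)\<^sup>2) / 2)"
    by (simp add: exp_sum[OF fin, symmetric] sum_distrib_left sum_divide_distrib power_mult_distrib)
  finally show "(\<integral>x. exp (l * (\<Sum>k\<in>K. c k * x k)) \<partial>PiM K (\<lambda>_. NG)) = exp (l\<^sup>2 * (\<Sum>k\<in>K. (c k)\<^sup>2) / 2)" .
qed

lemma lin_tail:
  assumes fin: "finite K" and S: "S > 0" "(\<Sum>k\<in>K. (c k)\<^sup>2) \<le> S" and s: "s \<ge> 0"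
  shows "measure (PiM K (\<lambda>_. NG)) {x\<in>space (PiM K (\<lambda>_. NG)). s \<le> (\<Sum>k\<in>K. c k * x k)} \<le> exp (- s\<^sup>2 / (2 * S))"
proof -
  let ?M = "PiM K (\<lambda>_. NG)"
  interpret prob_space ?M by (rule prob_PiNG)
  define l where "l = s / S"
  have l: "l \<ge> 0" using S s by (simp add: l_def)
  let ?Y = "\<lambda>x. exp (l * (\<Sum>k\<in>K. c k * x k))"
  have "measure ?M {x\<in>space ?M. s \<le> (\<Sum>k\<in>K. c k * x k)} \<le> measure ?M {x\<in>space ?M. exp (l * s) \<le> ?Y x}"
    by (rule finite_measure_mono) (auto intro: mult_left_mono l)
  also have "\<dots> \<le> (\<integral>x. ?Y x \<partial>?M) / exp (l * s)"
    by (rule integral_Markov_inequality_measure[where A="{}"]) (auto intro: lin_mgf(1)[OF fin])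
  also have "\<dots> = exp (l\<^sup>2 * (\<Sum>k\<in>K. (c k)\<^sup>2) / 2 - l * s)"
    by (simp add: lin_mgf(2)[OF fin] exp_diff)
  also have "\<dots> \<le> exp (l\<^sup>2 * S / 2 - l * s)"
    using S l by (auto intro: mult_left_mono divide_right_mono)
  also have "l\<^sup>2 * S / 2 - l * s = - s\<^sup>2 / (2 * S)"
    using S by (simp add: l_def power2_eq_square field_simps)
  finally show ?thesis .
qed

lemma coord_indep:
  assumes fin: "finite K" and ne: "K \<noteq> {}"
  shows "prob_space.indep_vars (PiM K (\<lambda>_. NG)) (\<lambda>_. NG) (\<lambda>k x. x k) K"
proof -
  interpret product_prob_space "\<lambda>_. NG" K
    by (simp add: product_prob_space_def product_prob_space_axioms_def product_sigma_finite_def prob_NG prob_space_imp_sigma_finite)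
  show ?thesis
  proof (subst P.indep_vars_iff_distr_eq_PiM[OF ne])
    show "\<And>i. random_variable NG (\<lambda>x. x i)"
    proof -
      fix i show "random_variable NG (\<lambda>x. x i)"
      proof (cases "i \<in> K")
        case True then show ?thesis by measurable
      next
        case False
        have "(\<lambda>x. undefined) \<in> measurable (PiM K (\<lambda>_. NG)) NG" by simp
        then show ?thesis
          by (rule measurable_cong[THEN iffD1, rotated]) (use False in \<open>auto simp: space_PiM PiE_def extensional_def\<close>)
      qed
    qed
    have "distr (PiM K (\<lambda>_. NG)) (PiM K (\<lambda>_. NG)) (\<lambda>x. \<lambda>i\<in>K. x i) = distr (PiM K (\<lambda>_. NG)) (PiM K (\<lambda>_. NG)) (\<lambda>x. x)"
      by (rule distr_cong) (auto simp: space_PiM PiE_def extensional_def fun_eq_iff restrict_def)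
    also have "\<dots> = PiM K (\<lambda>_. NG)" by simp
    also have "\<dots> = PiM K (\<lambda>i. distr (PiM K (\<lambda>_. NG)) NG (\<lambda>x. x i))"
      by (rule PiM_cong) (auto simp: distr_PiM_component[of K "\<lambda>_. NG", OF prob_NG])
    finally show "distr (PiM K (\<lambda>_. NG)) (PiM K (\<lambda>_. NG)) (\<lambda>x. \<lambda>i\<in>K. x i) = PiM K (\<lambda>i. distr (PiM K (\<lambda>_. NG)) NG (\<lambda>x. x i))" .
  qed
qed

lemma row_prod:
  fixes h :: "nat \<Rightarrow> real \<Rightarrow> real"
  assumes finI: "finite I" and finJ: "finite J" and ne: "I \<times> J \<noteq> {}" and G: "G \<subseteq> I"
    and hm: "\<And>i. h i \<in> borel_measurable borel" and hb: "\<And>i z. \<bar>h i z\<bar> \<le> B"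
  shows "(\<integral>x. (\<Prod>i\<in>G. h i (\<Sum>j\<in>J. x (i,j) * v j)) \<partial>PiM (I \<times> J) (\<lambda>_. NG))
       = (\<Prod>i\<in>G. \<integral>x. h i (\<Sum>j\<in>J. x (i,j) * v j) \<partial>PiM (I \<times> J) (\<lambda>_. NG))"
proof -
  let ?M = "PiM (I \<times> J) (\<lambda>_. NG)"
  interpret prob_space ?M by (rule prob_PiNG)
  have finG: "finite G" using G finI finite_subset by blast
  have ind1: "indep_vars (\<lambda>i. PiM ({i}\<times>J) (\<lambda>_. NG)) (\<lambda>i \<omega>. restrict (\<lambda>k. \<omega> k) ({i}\<times>J)) G"
    by (rule indep_vars_restrict[OF coord_indep[OF _ ne]]) (use finI finJ G in \<open>auto simp: disjoint_family_on_def\<close>)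
  have meas: "(\<lambda>r. h i (\<Sum>j\<in>J. r (i,j) * v j)) \<in> borel_measurable (PiM ({i}\<times>J) (\<lambda>_. NG))" for i
  proof -
    have "(\<lambda>r. (\<Sum>j\<in>J. r (i,j) * v j)) \<in> borel_measurable (PiM ({i}\<times>J) (\<lambda>_. NG))"
      by (intro borel_measurable_sum borel_measurable_times measurable_component_singleton) auto
    then show ?thesis using hm[of i] by measurable
  qed
  have ind2: "indep_vars (\<lambda>_. borel) (\<lambda>i \<omega>. h i (\<Sum>j\<in>J. (restrict (\<lambda>k. \<omega> k) ({i}\<times>J)) (i,j) * v j)) G"
    by (rule indep_vars_compose2[OF ind1, where Y="\<lambda>i r. h i (\<Sum>j\<in>J. r (i,j) * v j)"]) (rule meas)
  have eq: "(\<lambda>\<omega>. h i (\<Sum>j\<in>J. (restrict (\<lambda>k. \<omega> k) ({i}\<times>J)) (i,j) * v j)) = (\<lambda>\<omega>. h i (\<Sum>j\<in>J. \<omega> (i,j) * v j))" for i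
    by (auto intro!: ext arg_cong[where f="h i"] sum.cong)
  have ind3: "indep_vars (\<lambda>_. borel) (\<lambda>i \<omega>. h i (\<Sum>j\<in>J. \<omega> (i,j) * v j)) G"
    using ind2 unfolding eq .
  have intg: "integrable ?M (\<lambda>\<omega>. h i (\<Sum>j\<in>J. \<omega> (i,j) * v j))" if "i \<in> G" for i
  proof (rule integrable_const_bound[where B=B])
    show "AE x in ?M. norm (h i (\<Sum>j\<in>J. x (i, j) * v j)) \<le> B" using hb by simp
    show "(\<lambda>\<omega>. h i (\<Sum>j\<in>J. \<omega> (i,j) * v j)) \<in> borel_measurable ?M"
      using ind3 that unfolding indep_vars_def by auto
  qed
  show ?thesis
    by (rule indep_vars_lebesgue_integral[OF finG ind3 intg])
qed

lemma sum_row: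
  assumes "i \<in> I" "finite I" "finite J"
  shows "(\<Sum>k\<in>I\<times>J. (if fst k = i then g k else 0)) = (\<Sum>j\<in>J. g (i,j))"
proof -
  have "(\<Sum>k\<in>I\<times>J. (if fst k = i then g k else 0)) = (\<Sum>a\<in>I. \<Sum>b\<in>J. (if a = i then g (a,b) else 0))"
    by (subst sum.cartesian_product) (auto intro!: sum.cong)
  also have "\<dots> = (\<Sum>a\<in>I. if a = i then (\<Sum>b\<in>J. g (a,b)) else 0)"
    by (auto intro!: sum.cong)
  also have "\<dots> = (\<Sum>j\<in>J. g (i,j))" using assms by simp
  finally show ?thesis .
qed

lemma row_mgf:
  fixes I J :: "nat set" and i :: nat and v :: "nat \<Rightarrow> real"
  assumes "i \<in> I" "finite I" "finite J"
  shows "integrable (PiM (I \<times> J) (\<lambda>_. NG)) (\<lambda>x. exp (l * (\<Sum>j\<in>J. x (i,j) * v j)))"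
    and "(\<integral>x. exp (l * (\<Sum>j\<in>J. x (i,j) * v j)) \<partial>PiM (I \<times> J) (\<lambda>_. NG)) = exp (l\<^sup>2 * (\<Sum>j\<in>J. (v j)\<^sup>2) / 2)"
proof -
  define c where "c k = (if fst k = i then v (snd k) else 0)" for k :: "nat \<times> nat"
  have e1: "(\<Sum>k\<in>I\<times>J. c k * x k) = (\<Sum>j\<in>J. x (i,j) * v j)" for x :: "nat \<times> nat \<Rightarrow> real"
  proof -
    have "(\<Sum>k\<in>I\<times>J. c k * x k) = (\<Sum>k\<in>I\<times>J. if fst k = i then x k * v (snd k) else 0)"
      by (auto intro!: sum.cong simp: c_def)
    also have "\<dots> = (\<Sum>j\<in>J. x (i,j) * v j)" using sum_row[OF assms, of "\<lambda>k. x k * v (snd k)"] by simp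
    finally show ?thesis .
  qed
  have e2: "(\<Sum>k\<in>I\<times>J. (c k)\<^sup>2) = (\<Sum>j\<in>J. (v j)\<^sup>2)"
  proof -
    have "(\<Sum>k\<in>I\<times>J. (c k)\<^sup>2) = (\<Sum>k\<in>I\<times>J. if fst k = i then (v (snd k))\<^sup>2 else 0)"
      by (auto intro!: sum.cong simp: c_def)
    also have "\<dots> = (\<Sum>j\<in>J. (v j)\<^sup>2)" using sum_row[OF assms, of "\<lambda>k. (v (snd k))\<^sup>2"] by simp
    finally show ?thesis .
  qed
  have fin: "finite (I \<times> J)" using assms by simp
  show "integrable (PiM (I \<times> J) (\<lambda>_. NG)) (\<lambda>x. exp (l * (\<Sum>j\<in>J. x (i,j) * v j)))"
    using lin_mgf(1)[OF fin, of l c] by (simp add: e1)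
  show "(\<integral>x. exp (l * (\<Sum>j\<in>J. x (i,j) * v j)) \<partial>PiM (I \<times> J) (\<lambda>_. NG)) = exp (l\<^sup>2 * (\<Sum>j\<in>J. (v j)\<^sup>2) / 2)"
    using lin_mgf(2)[OF fin, of l c] by (simp add: e1 e2)
qed

lemma num_bounds: "exp (1/2::real) \<ge> 25/16" "exp (1/10::real) \<le> 111/100" "exp (2::real) \<le> 74/10"
proof -
  have "exp (1/4::real) \<ge> 5/4" using exp_ge_add_one_self[of "1/4::real"] by simp
  then have "exp (1/4::real) * exp (1/4) \<ge> 5/4 * (5/4)" by (intro mult_mono) auto
  then show "exp (1/2::real) \<ge> 25/16" by (simp add: exp_add[symmetric])
  show "exp (1/10::real) \<le> 111/100" using exp_bound[of "1/10::real"] by (simp add: power2_eq_square)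
  have "exp (1::real) * exp 1 \<le> 272/100 * (272/100)" using e_less_272 by (intro mult_mono) auto
  then show "exp (2::real) \<le> 74/10" by (simp add: exp_add[symmetric])
qed

lemma anti_conc:
  fixes I J :: "nat set" and i :: nat and v :: "nat \<Rightarrow> real"
  assumes iI: "i \<in> I" and fin: "finite I" "finite J"
    and S1: "1/4 \<le> (\<Sum>j\<in>J. (v j)\<^sup>2)" and S2: "(\<Sum>j\<in>J. (v j)\<^sup>2) \<le> 4"
  shows "1/40 \<le> (\<integral>x. (if 1/20 \<le> \<bar>\<Sum>j\<in>J. x (i,j) * v j\<bar> then 1 else (0::real)) \<partial>PiM (I \<times> J) (\<lambda>_. NG))"
proof -
  let ?M = "PiM (I \<times> J) (\<lambda>_. NG)"
  interpret prob_space ?M by (rule prob_PiNG)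
  define S where "S = (\<Sum>j\<in>J. (v j)\<^sup>2)"
  define t where "t = 1 / sqrt S"
  define Z where "Z x = (\<Sum>j\<in>J. x (i,j) * v j)" for x :: "nat \<times> nat \<Rightarrow> real"
  define ind where "ind x = (if 1/20 \<le> \<bar>Z x\<bar> then 1 else (0::real))" for x
  have Spos: "S > 0" using S1 by (simp add: S_def)
  have t2S: "t\<^sup>2 * S = 1" using Spos by (simp add: t_def power_divide)
  have tpos: "t > 0" using Spos by (simp add: t_def)
  have "sqrt S \<ge> sqrt (1/4)" using S1 by (simp add: S_def)
  then have "sqrt S \<ge> 1/2" by (simp add: real_sqrt_divide)
  then have t2: "t \<le> 2" using Spos by (simp add: t_def field_simps)
  have Zm: "Z \<in> borel_measurable ?M"
    unfolding Z_def using iI by (intro borel_measurable_sum borel_measurable_times measurable_component_singleton) auto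
  have indm: "ind \<in> borel_measurable ?M" unfolding ind_def using Zm by measurable
  have indi: "integrable ?M ind"
    by (rule integrable_const_bound[where B=1]) (auto simp: ind_def indm)
  have i1: "integrable ?M (\<lambda>x. exp (t * Z x))" unfolding Z_def by (rule row_mgf(1)[OF iI fin])
  have i2: "integrable ?M (\<lambda>x. exp ((2*t) * Z x))" unfolding Z_def by (rule row_mgf(1)[OF iI fin])
  have e1: "(\<integral>x. exp (t * Z x) \<partial>?M) = exp (1/2)"
    unfolding Z_def by (subst row_mgf(2)[OF iI fin]) (simp add: t2S[unfolded S_def])
  have e2: "(\<integral>x. exp ((2*t) * Z x) \<partial>?M) = exp 2"
  proof -
    have "(2*t)\<^sup>2 * (\<Sum>j\<in>J. (v j)\<^sup>2) / 2 = 2" using t2S by (simp add: S_def power_mult_distrib)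
    then show ?thesis unfolding Z_def by (subst row_mgf(2)[OF iI fin]) simp
  qed
  have pw: "exp (t * Z x) \<le> exp (1/10) + exp ((2*t) * Z x) / 40 + 10 * ind x" for x
  proof (cases "1/20 \<le> \<bar>Z x\<bar>")
    case True
    have "exp (t * Z x) \<le> (exp (t * Z x))\<^sup>2 / 40 + 10"
      using sum_squares_ge_zero[of "exp (t * Z x) - 20" 0] by (simp add: power2_eq_square field_simps)
    also have "(exp (t * Z x))\<^sup>2 = exp ((2*t) * Z x)" by (simp add: power2_eq_square exp_add[symmetric])
    finally have c: "exp (t * Z x) \<le> exp ((2*t) * Z x) / 40 + 10" .
    have "ind x = 1" using True by (simp add: ind_def)
    moreover have "0 \<le> exp (1/10::real)" by simp
    ultimately show ?thesis using c by linarith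
  next
    case False
    have "t * Z x \<le> t * \<bar>Z x\<bar>" using tpos by (intro mult_left_mono) auto
    also have "\<dots> \<le> 2 * (1/20)"
      using False tpos t2 by (intro mult_mono) auto
    finally have "t * Z x \<le> 2 * (1/20)" .
    then have c: "exp (t * Z x) \<le> exp (1/10)" by simp
    have "ind x = 0" using False by (simp add: ind_def)
    moreover have "0 \<le> exp ((2*t) * Z x) / 40" by simp
    ultimately show ?thesis using c by linarith
  qed
  have "exp (1/2) \<le> (\<integral>x. exp (1/10) + exp ((2*t) * Z x) / 40 + 10 * ind x \<partial>?M)"
    unfolding e1[symmetric] by (rule integral_mono) (auto intro!: i1 i2 indi pw Bochner_Integration.integrable_add integrable_divide integrable_mult_right)
  also have "\<dots> = exp (1/10) + exp 2 / 40 + 10 * (\<integral>x. ind x \<partial>?M)"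
    using i2 indi by (simp add: e2 prob_space)
  finally have "exp (1/2) \<le> exp (1/10) + exp 2 / 40 + 10 * (\<integral>x. ind x \<partial>?M)" .
  then show ?thesis using num_bounds unfolding ind_def Z_def by linarith
qed

lemma chernoff_rows:
  fixes I J G :: "nat set" and v :: "nat \<Rightarrow> real" and c p :: real
  assumes finI: "finite I" and finJ: "finite J" and ne: "I \<times> J \<noteq> {}" and G: "G \<subseteq> I" and p: "p \<ge> 0"
    and pi: "\<And>i. i \<in> G \<Longrightarrow> p \<le> (\<integral>x. (if c \<le> \<bar>\<Sum>j\<in>J. x (i,j) * v j\<bar> then 1 else (0::real)) \<partial>PiM (I \<times> J) (\<lambda>_. NG))"
  shows "measure (PiM (I \<times> J) (\<lambda>_. NG)) {x\<in>space (PiM (I \<times> J) (\<lambda>_. NG)).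
           (\<Sum>i\<in>G. (if c \<le> \<bar>\<Sum>j\<in>J. x (i,j) * v j\<bar> then 1 else (0::real))) \<le> p * card G / 4}
         \<le> exp (- (p * card G / 4))"
proof -
  let ?M = "PiM (I \<times> J) (\<lambda>_. NG)"
  interpret prob_space ?M by (rule prob_PiNG)
  define ind where "ind (i::nat) (x::nat\<times>nat\<Rightarrow>real) = (if c \<le> \<bar>\<Sum>j\<in>J. x (i,j) * v j\<bar> then 1 else (0::real))" for i x
  define h where "h z = exp (- (if c \<le> \<bar>z\<bar> then 1 else (0::real)))" for z
  define m where "m = real (card G)"
  have finG: "finite G" using G finI finite_subset by blast
  have indm: "ind i \<in> borel_measurable ?M" if "i \<in> G" for i
  proof -
    have "(\<lambda>x. \<Sum>j\<in>J. x (i,j) * v j) \<in> borel_measurable ?M"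
      using that G by (intro borel_measurable_sum borel_measurable_times measurable_component_singleton) auto
    then show ?thesis unfolding ind_def by measurable
  qed
  have indi: "integrable ?M (ind i)" if "i \<in> G" for i
    by (rule integrable_const_bound[where B=1]) (auto simp: ind_def indm[OF that])
  have hm: "h \<in> borel_measurable borel" unfolding h_def by measurable
  have hb: "\<bar>h z\<bar> \<le> 1" for z by (simp add: h_def)
  have eQ: "exp (- (\<Sum>i\<in>G. ind i x)) = (\<Prod>i\<in>G. h (\<Sum>j\<in>J. x (i,j) * v j))" for x
    by (simp add: exp_sum[OF finG, symmetric] sum_negf[symmetric] h_def ind_def)
  have Sm[measurable]: "(\<lambda>x. \<Sum>i\<in>G. ind i x) \<in> borel_measurable ?M"
    by (rule borel_measurable_sum) (rule indm)
  have Qm: "(\<lambda>x. exp (- (\<Sum>i\<in>G. ind i x))) \<in> borel_measurable ?M"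
    by measurable
  have Qi: "integrable ?M (\<lambda>x. exp (- (\<Sum>i\<in>G. ind i x)))"
  proof (rule integrable_const_bound[where B=1])
    show "AE x in ?M. norm (exp (- (\<Sum>i\<in>G. ind i x))) \<le> 1"
      by (auto intro!: sum_nonneg simp: ind_def)
  qed (rule Qm)
  have hrow: "(\<integral>x. h (\<Sum>j\<in>J. x (i,j) * v j) \<partial>?M) \<le> exp (- (p/2))" if "i \<in> G" for i
  proof -
    have eh: "h (\<Sum>j\<in>J. x (i,j) * v j) = 1 - (1 - exp (-1)) * ind i x" for x
      by (simp add: h_def ind_def)
    have "(\<integral>x. h (\<Sum>j\<in>J. x (i,j) * v j) \<partial>?M) = 1 - (1 - exp (-1)) * (\<integral>x. ind i x \<partial>?M)"
      unfolding eh using indi[OF that] by (simp add: prob_space)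
    also have "exp (-1::real) \<le> 1/2"
    proof -
      have "2 \<le> exp (1::real)" using exp_ge_add_one_self[of "1::real"] by simp
      then show ?thesis by (simp add: exp_minus field_simps)
    qed
    then have "1 - (1 - exp (-1)) * (\<integral>x. ind i x \<partial>?M) \<le> 1 - (1/2) * p"
      using pi[OF that] p unfolding ind_def
      by (intro diff_left_mono mult_mono) auto
    also have "\<dots> \<le> exp (- (p/2))" using exp_ge_add_one_self[of "- (p/2)"] by simp
    finally show ?thesis .
  qed
  have E: "(\<integral>x. exp (- (\<Sum>i\<in>G. ind i x)) \<partial>?M) \<le> exp (- (p * m / 2))"
  proof -
    have "(\<integral>x. exp (- (\<Sum>i\<in>G. ind i x)) \<partial>?M) = (\<Prod>i\<in>G. \<integral>x. h (\<Sum>j\<in>J. x (i,j) * v j) \<partial>?M)"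
      unfolding eQ by (rule row_prod[OF finI finJ ne G hm hb])
    also have "\<dots> \<le> (\<Prod>i\<in>G. exp (- (p/2)))"
    proof (rule prod_mono)
      fix i assume "i \<in> G"
      then show "0 \<le> (\<integral>x. h (\<Sum>j\<in>J. x (i,j) * v j) \<partial>?M) \<and> (\<integral>x. h (\<Sum>j\<in>J. x (i,j) * v j) \<partial>?M) \<le> exp (- (p/2))"
        using hrow[of i] by (auto intro: integral_nonneg_AE simp: h_def)
    qed
    also have "(\<Prod>i\<in>G. exp (- (p/2))) = exp (- (p * m / 2))"
      by (simp add: m_def exp_of_nat_mult[symmetric] algebra_simps)
    finally show ?thesis .
  qed
  have "measure ?M {x\<in>space ?M. (\<Sum>i\<in>G. ind i x) \<le> p * m / 4}
      \<le> measure ?M {x\<in>space ?M. exp (- (p * m / 4)) \<le> exp (- (\<Sum>i\<in>G. ind i x))}"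
    by (rule finite_measure_mono) auto
  also have "\<dots> \<le> (\<integral>x. exp (- (\<Sum>i\<in>G. ind i x)) \<partial>?M) / exp (- (p * m / 4))"
    by (rule integral_Markov_inequality_measure[where A="{}"]) (auto intro: Qi)
  also have "\<dots> \<le> exp (- (p * m / 2)) / exp (- (p * m / 4))"
    by (rule divide_right_mono[OF E]) simp
  also have "exp (- (p * m / 2)) / exp (- (p * m / 4)) = exp (- (p * m / 4))"
    by (simp add: exp_diff[symmetric])
  finally show ?thesis by (simp add: ind_def m_def)
qed

lemma geo_nat:
  fixes t :: real
  assumes "t > 0"
  shows "(\<Sum>a\<in>{0..B::int}. exp (- t * \<bar>a\<bar>)) \<le> 1 / (1 - exp (- t))"
proof (cases "B < 0")
  case True then show ?thesis using assms by simp
next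
  case False
  let ?x = "exp (- t)"
  have x1: "?x < 1" using assms by simp
  have x0: "?x > 0" by simp
  have "{0..B} = int ` {..<Suc (nat B)}"
  proof
    show "{0..B} \<subseteq> int ` {..<Suc (nat B)}"
    proof
      fix a assume a: "a \<in> {0..B}"
      then have "a = int (nat a)" "nat a \<in> {..<Suc (nat B)}" by auto
      then show "a \<in> int ` {..<Suc (nat B)}" by blast
    qed
    show "int ` {..<Suc (nat B)} \<subseteq> {0..B}" using False by auto
  qed
  then have "(\<Sum>a\<in>{0..B::int}. exp (- t * \<bar>a\<bar>)) = (\<Sum>n<Suc (nat B). exp (- t * real n))"
    by (simp add: sum.reindex)
  also have "\<dots> = (\<Sum>n<Suc (nat B). ?x ^ n)"
    by (simp add: exp_of_nat_mult[symmetric] mult.commute)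
  also have "\<dots> = (1 - ?x ^ Suc (nat B)) / (1 - ?x)" using x1 sum_gp_strict[of ?x "Suc (nat B)"] by (simp only: if_False) simp
  also have "\<dots> \<le> 1 / (1 - ?x)" using x1 x0 by (intro divide_right_mono) auto
  finally show ?thesis .
qed

lemma geo_int:
  fixes t :: real
  assumes "t > 0"
  shows "(\<Sum>a\<in>{-B..B::int}. exp (- t * \<bar>a\<bar>)) \<le> 2 / (1 - exp (- t))"
proof -
  have U: "{-B..B} = {-B..<0} \<union> {0..B}" by auto
  have "(\<Sum>a\<in>{-B..B::int}. exp (- t * \<bar>a\<bar>)) = (\<Sum>a\<in>{-B..<0}. exp (- t * \<bar>a\<bar>)) + (\<Sum>a\<in>{0..B}. exp (- t * \<bar>a\<bar>))"
    unfolding U by (rule sum.union_disjoint) auto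
  also have "(\<Sum>a\<in>{-B..<0}. exp (- t * \<bar>a\<bar>)) \<le> (\<Sum>a\<in>{-B..0}. exp (- t * \<bar>a\<bar>))"
    by (rule sum_mono2) auto
  also have "{-B..0} = uminus ` {0..B}"
  proof
    show "{-B..0} \<subseteq> uminus ` {0..B}"
    proof
      fix a assume a: "a \<in> {-B..0}"
      then have "a = - (-a)" "-a \<in> {0..B}" by auto
      then show "a \<in> uminus ` {0..B}" by blast
    qed
  qed auto
  also have "(\<Sum>a\<in>uminus ` {0..B}. exp (- t * \<bar>a\<bar>)) = (\<Sum>a\<in>{0..B}. exp (- t * \<bar>a\<bar>))"
    by (subst sum.reindex) auto
  finally show ?thesis using geo_nat[OF assms, of B] by simp
qed

definition gridnet :: "nat set \<Rightarrow> real \<Rightarrow> (nat \<Rightarrow> real) set" where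
  "gridnet S e = {v. (\<forall>j. j \<notin> S \<longrightarrow> v j = 0) \<and>
     (\<forall>j\<in>S. \<exists>z::int. v j = e / sqrt (real (card S)) * of_int z) \<and> (\<Sum>j\<in>S. (v j)\<^sup>2) \<le> 4}"

lemma sq_diff_le: "(a - b)\<^sup>2 \<le> 2 * a\<^sup>2 + 2 * (b::real)\<^sup>2"
  using sum_squares_ge_zero[of "a+b" 0] by (simp add: power2_eq_square algebra_simps)

lemma gridnet_approx:
  assumes fin: "finite S" and e: "0 < e" "e \<le> 1" and u: "(\<Sum>j\<in>S. (u j)\<^sup>2) \<le> 1"
  shows "\<exists>v\<in>gridnet S e. (\<Sum>j\<in>S. (u j - v j)\<^sup>2) \<le> e\<^sup>2"
proof (cases "S = {}")
  case True
  then show ?thesis by (intro bexI[of _ "\<lambda>_. 0"]) (auto simp: gridnet_def)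
next
  case False
  define h where "h = e / sqrt (real (card S))"
  have cpos: "card S > 0" using False fin by (simp add: card_gt_0_iff)
  have hpos: "h > 0" using cpos e by (simp add: h_def)
  have h2: "h\<^sup>2 * card S = e\<^sup>2" using cpos by (simp add: h_def power_divide)
  define v where "v j = (if j \<in> S then h * of_int (round (u j / h)) else 0)" for j
  have d: "(u j - v j)\<^sup>2 \<le> h\<^sup>2 / 4" if "j \<in> S" for j
  proof -
    have "\<bar>u j - v j\<bar> = h * \<bar>u j / h - of_int (round (u j / h))\<bar>"
    proof -
      have "u j - v j = h * (u j / h - of_int (round (u j / h)))"
        using hpos that by (simp add: v_def right_diff_distrib)
      then show ?thesis using hpos by (simp add: abs_mult)
    qed
    also have "\<dots> \<le> h * (1/2)"
      using of_int_round_abs_le[of "u j / h"] hpos by (intro mult_left_mono) (auto simp: abs_minus_commute)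
    finally have "\<bar>u j - v j\<bar> \<le> h / 2" by simp
    then have "\<bar>u j - v j\<bar>\<^sup>2 \<le> (h/2)\<^sup>2" by (intro power_mono) auto
    then show ?thesis by (simp add: power_divide)
  qed
  have D: "(\<Sum>j\<in>S. (u j - v j)\<^sup>2) \<le> e\<^sup>2 / 4"
  proof -
    have "(\<Sum>j\<in>S. (u j - v j)\<^sup>2) \<le> (\<Sum>j\<in>S. h\<^sup>2 / 4)" by (rule sum_mono) (rule d)
    also have "\<dots> = e\<^sup>2 / 4" using h2 by (simp add: field_simps)
    finally show ?thesis .
  qed
  have "(\<Sum>j\<in>S. (v j)\<^sup>2) \<le> (\<Sum>j\<in>S. 2 * (u j)\<^sup>2 + 2 * (u j - v j)\<^sup>2)"
    by (rule sum_mono) (use sq_diff_le[of "u j" "u j - v j" for j] in auto)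
  also have "\<dots> = 2 * (\<Sum>j\<in>S. (u j)\<^sup>2) + 2 * (\<Sum>j\<in>S. (u j - v j)\<^sup>2)"
    by (simp add: sum.distrib sum_distrib_left)
  also have "\<dots> \<le> 4" using u D e
  proof -
    have "e\<^sup>2 \<le> 1" using e by (simp add: power_le_one)
    then show ?thesis using u D by linarith
  qed
  finally have v4: "(\<Sum>j\<in>S. (v j)\<^sup>2) \<le> 4" .
  have "v \<in> gridnet S e" unfolding gridnet_def using v4
    by (auto simp: v_def h_def)
  moreover have "(\<Sum>j\<in>S. (u j - v j)\<^sup>2) \<le> e\<^sup>2"
  proof -
    have "0 \<le> e\<^sup>2" by simp
    then show ?thesis using D by linarith
  qed
  ultimately show ?thesis by blast
qed

definition gA :: "real \<Rightarrow> real" where "gA e = 2 * exp 1 / (1 - exp (- (e\<^sup>2/4)))"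

lemma int_sq_ge_abs: "\<bar>real_of_int z\<bar> \<le> (real_of_int z)\<^sup>2"
proof (cases "z = 0")
  case False
  then have "1 \<le> \<bar>real_of_int z\<bar>" by linarith
  then have "\<bar>real_of_int z\<bar> * 1 \<le> \<bar>real_of_int z\<bar> * \<bar>real_of_int z\<bar>" by (intro mult_left_mono) auto
  then show ?thesis by (simp add: power2_eq_square)
qed simp

lemma gridnet_card:
  assumes fin: "finite S" and e: "0 < e"
  shows "finite (gridnet S e) \<and> real (card (gridnet S e)) \<le> (gA e) ^ card S"
proof (cases "S = {}")
  case True
  have "gridnet S e = {\<lambda>_. 0}" using True by (auto simp: gridnet_def)
  then show ?thesis using True by simp
next
  case False
  define k where "k = card S"
  define h where "h = e / sqrt (real k)"
  define t where "t = e\<^sup>2 / 4"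
  define R where "R = 4 / h\<^sup>2"
  define B where "B = \<lceil>2 / h\<rceil>"
  define \<phi> where "\<phi> v = restrict (\<lambda>j. round (v j / h)) S" for v :: "nat \<Rightarrow> real"
  define Box where "Box = PiE S (\<lambda>_. {-B..B})"
  have kpos: "k > 0" using False fin by (simp add: k_def card_gt_0_iff)
  have hpos: "h > 0" using kpos e by (simp add: h_def)
  have tpos: "t > 0" using e by (simp add: t_def)
  have tR: "t * R = k" using kpos e by (simp add: t_def R_def h_def power_divide)
  have mem: "\<And>v j. v \<in> gridnet S e \<Longrightarrow> j \<in> S \<Longrightarrow> v j = h * of_int (round (v j / h))"
  proof -
    fix v j assume v: "v \<in> gridnet S e" and j: "j \<in> S"
    then obtain z :: int where z: "v j = h * of_int z" by (auto simp: gridnet_def h_def k_def)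
    then show "v j = h * of_int (round (v j / h))" using hpos by simp
  qed
  have inj: "inj_on \<phi> (gridnet S e)"
  proof (rule inj_onI)
    fix v w assume v: "v \<in> gridnet S e" and w: "w \<in> gridnet S e" and eq: "\<phi> v = \<phi> w"
    show "v = w"
    proof
      fix j show "v j = w j"
      proof (cases "j \<in> S")
        case True
        have "round (v j / h) = round (w j / h)" using eq True unfolding \<phi>_def by (metis restrict_apply')
        then show ?thesis using mem[OF v True] mem[OF w True] by simp
      next
        case False then show ?thesis using v w by (auto simp: gridnet_def)
      qed
    qed
  qed
  have zbound: "(real_of_int (\<phi> v j))\<^sup>2 \<le> R" "\<phi> v \<in> Box" "(\<Sum>j\<in>S. (real_of_int (\<phi> v j))\<^sup>2) \<le> R"
    if v: "v \<in> gridnet S e" and "j \<in> S" for v j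
  proof -
    have v4: "(\<Sum>j\<in>S. (v j)\<^sup>2) \<le> 4" using v by (simp add: gridnet_def)
    have eqs: "(\<Sum>j\<in>S. (v j)\<^sup>2) = h\<^sup>2 * (\<Sum>j\<in>S. (real_of_int (\<phi> v j))\<^sup>2)"
      by (subst sum_distrib_left) (auto intro!: sum.cong simp: \<phi>_def power_mult_distrib[symmetric] mem[OF v, symmetric])
    show sR: "(\<Sum>j\<in>S. (real_of_int (\<phi> v j))\<^sup>2) \<le> R"
      using v4 hpos unfolding eqs by (simp add: R_def field_simps)
    have one: "(real_of_int (\<phi> v j'))\<^sup>2 \<le> R" if "j' \<in> S" for j'
      using sR member_le_sum[of j' S "\<lambda>j. (real_of_int (\<phi> v j))\<^sup>2", OF that _ fin] by auto
    show "(real_of_int (\<phi> v j))\<^sup>2 \<le> R" by (rule one) fact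
    have "\<phi> v j' \<in> {-B..B}" if "j' \<in> S" for j'
    proof -
      have "\<bar>real_of_int (\<phi> v j')\<bar> \<le> sqrt R" using one[OF that] real_le_rsqrt[of "\<bar>real_of_int (\<phi> v j')\<bar>" R] by simp
      also have "sqrt R = 2 / h" using hpos by (simp add: R_def real_sqrt_divide)
      also have "\<dots> \<le> of_int B" by (simp add: B_def)
      finally have "\<bar>\<phi> v j'\<bar> \<le> B" by linarith
      then show ?thesis by auto
    qed
    then show "\<phi> v \<in> Box" by (auto simp: Box_def \<phi>_def)
  qed
  have finBox: "finite Box" using fin by (simp add: Box_def finite_PiE)
  obtain j0 where j0: "j0 \<in> S" using False by auto
  have imgsub: "\<phi> ` gridnet S e \<subseteq> Box" using zbound(2)[OF _ j0] by auto
  have fing: "finite (gridnet S e)"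
    using finite_imageD[OF finite_subset[OF imgsub finBox] inj] .
  define f where "f z = exp (t * (R - (\<Sum>j\<in>S. (real_of_int (z j))\<^sup>2)))" for z :: "nat \<Rightarrow> int"
  have "real (card (gridnet S e)) = real (card (\<phi> ` gridnet S e))" by (simp add: card_image[OF inj])
  also have "\<dots> = (\<Sum>z\<in>\<phi> ` gridnet S e. 1)" by simp
  also have "\<dots> \<le> (\<Sum>z\<in>\<phi> ` gridnet S e. f z)"
  proof (rule sum_mono)
    fix z assume "z \<in> \<phi> ` gridnet S e"
    then obtain v where v: "v \<in> gridnet S e" "z = \<phi> v" by auto
    then show "1 \<le> f z" using zbound(3)[OF v(1) j0] tpos unfolding f_def by (auto simp: v(2))
  qed
  also have "\<dots> \<le> (\<Sum>z\<in>Box. f z)" by (rule sum_mono2[OF finBox imgsub]) (auto simp: f_def)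
  also have "\<dots> = (\<Sum>z\<in>Box. exp (t * R) * (\<Prod>j\<in>S. exp (- t * (real_of_int (z j))\<^sup>2)))"
    by (auto intro!: sum.cong simp: f_def exp_sum[OF fin, symmetric] exp_add[symmetric] sum_distrib_left sum_negf right_diff_distrib)
  also have "\<dots> \<le> (\<Sum>z\<in>Box. exp (t * R) * (\<Prod>j\<in>S. exp (- t * \<bar>real_of_int (z j)\<bar>)))"
    by (intro sum_mono mult_left_mono prod_mono) (auto intro: mult_left_mono int_sq_ge_abs simp: tpos less_imp_le)
  also have "\<dots> = exp (t * R) * (\<Prod>j\<in>S. \<Sum>a\<in>{-B..B}. exp (- t * \<bar>real_of_int a\<bar>))"
    unfolding Box_def sum_distrib_left[symmetric]
    using prod_sum_PiE[OF fin, of "\<lambda>_. {-B..B}" "\<lambda>j a. exp (- t * \<bar>real_of_int a\<bar>)"] by simp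
  also have "\<dots> \<le> exp (t * R) * (\<Prod>j\<in>S. 2 / (1 - exp (- t)))"
    using geo_int[OF tpos, of B] by (intro mult_left_mono prod_mono) (auto intro: sum_nonneg)
  also have "\<dots> = (gA e) ^ card S"
  proof -
    have "exp (t * R) = exp 1 ^ card S" using tR by (simp add: k_def exp_of_nat_mult[symmetric])
    moreover have "gA e = exp 1 * (2 / (1 - exp (- t)))" by (simp add: gA_def t_def)
    ultimately show ?thesis by (simp only: prod_constant power_mult_distrib)
  qed
  finally show ?thesis using fing by simp
qed

definition psi :: "real \<Rightarrow> real" where "psi t = max (-2) (min 2 t)"

lemma huber_ge_lin: "huber b \<ge> 2 * b - 2" "huber b \<ge> - 2 * b - 2"
  unfolding huber_def using sum_squares_ge_zero[of "b - 2" 0] sum_squares_ge_zero[of "b + 2" 0]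
  by (auto simp: power2_eq_square algebra_simps)

lemma huber_sub: "huber b \<ge> huber a + psi a * (b - a)"
proof (cases "\<bar>a\<bar> \<le> 2")
  case True
  then have pa: "psi a = a" "huber a = a\<^sup>2/2" by (auto simp: psi_def huber_def)
  show ?thesis
  proof (cases "\<bar>b\<bar> \<le> 2")
    case True
    then have "huber b = b\<^sup>2/2" by (simp add: huber_def)
    then show ?thesis using pa sum_squares_ge_zero[of "b - a" 0] by (simp add: power2_eq_square algebra_simps)
  next
    case False
    then have hb: "huber b = 2 * \<bar>b\<bar> - 2" by (simp add: huber_def)
    show ?thesis
    proof (cases "b > 2")
      case True
      have "(b - 2)\<^sup>2 \<le> (b - a)\<^sup>2" using \<open>\<bar>a\<bar> \<le> 2\<close> True by (intro power_mono) auto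
      then show ?thesis using pa hb True by (simp add: power2_eq_square algebra_simps)
    next
      case False
      then have b: "b < -2" using \<open>\<not> \<bar>b\<bar> \<le> 2\<close> by auto
      have "(-2 - b)\<^sup>2 \<le> (a - b)\<^sup>2" using \<open>\<bar>a\<bar> \<le> 2\<close> b by (intro power_mono) auto
      then show ?thesis using pa hb b by (simp add: power2_eq_square algebra_simps)
    qed
  qed
next
  case False
  show ?thesis
  proof (cases "a > 2")
    case True
    then have "psi a = 2" "huber a = 2 * a - 2" by (auto simp: psi_def huber_def)
    then show ?thesis using huber_ge_lin(1)[of b] by (simp add: algebra_simps)
  next
    case False
    then have "a < -2" using \<open>\<not> \<bar>a\<bar> \<le> 2\<close> by auto
    then have "psi a = -2" "huber a = - 2 * a - 2" by (auto simp: psi_def huber_def)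
    then show ?thesis using huber_ge_lin(2)[of b] by (simp add: algebra_simps)
  qed
qed

lemma huber_sub2:
  assumes "\<bar>a\<bar> \<le> 1" "\<bar>b - a\<bar> \<le> 1"
  shows "huber b = huber a + psi a * (b - a) + (b - a)\<^sup>2 / 2"
proof -
  have "\<bar>b\<bar> \<le> 2" using assms by auto
  moreover have "\<bar>a\<bar> \<le> 2" using assms by auto
  ultimately have "huber b = b\<^sup>2/2" "huber a = a\<^sup>2/2" "psi a = a" by (auto simp: huber_def psi_def)
  then show ?thesis by (simp add: power2_eq_square field_simps)
qed

lemma huber_convex:
  assumes "0 \<le> s" "s \<le> 1"
  shows "huber ((1 - s) * a + s * b) \<le> (1 - s) * huber a + s * huber b"
proof -
  define x where "x = (1 - s) * a + s * b"
  have 1: "huber a \<ge> huber x + psi x * (a - x)" by (rule huber_sub)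
  have 2: "huber b \<ge> huber x + psi x * (b - x)" by (rule huber_sub)
  have "(1 - s) * huber a + s * huber b \<ge> (1 - s) * (huber x + psi x * (a - x)) + s * (huber x + psi x * (b - x))"
    using assms 1 2 by (intro add_mono mult_left_mono) auto
  also have "(1 - s) * (huber x + psi x * (a - x)) + s * (huber x + psi x * (b - x)) = huber x"
    by (simp add: x_def algebra_simps)
  finally show ?thesis by (simp add: x_def)
qed

lemma psi_bound: "\<bar>psi t\<bar> \<le> 2" by (simp add: psi_def)

lemma CS_abs:
  fixes a b :: "nat \<Rightarrow> real"
  shows "\<bar>\<Sum>i\<in>A. a i * b i\<bar> \<le> sqrt (\<Sum>i\<in>A. (a i)\<^sup>2) * sqrt (\<Sum>i\<in>A. (b i)\<^sup>2)"
proof -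
  have "\<bar>\<Sum>i\<in>A. a i * b i\<bar> = sqrt ((\<Sum>i\<in>A. a i * b i)\<^sup>2)" by simp
  also have "\<dots> \<le> sqrt ((\<Sum>i\<in>A. (a i)\<^sup>2) * (\<Sum>i\<in>A. (b i)\<^sup>2))"
    by (rule real_sqrt_le_mono) (rule Cauchy_Schwarz_ineq_sum)
  also have "\<dots> = sqrt (\<Sum>i\<in>A. (a i)\<^sup>2) * sqrt (\<Sum>i\<in>A. (b i)\<^sup>2)" by (simp add: real_sqrt_mult)
  finally show ?thesis .
qed

lemma det_D1:
  fixes w :: "nat \<Rightarrow> real"
  assumes fin: "finite J" and s1: "s1 \<ge> 0"
    and net: "\<And>v. v \<in> gridnet J (1/2) \<Longrightarrow> (\<Sum>j\<in>J. w j * v j) < s1"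
  shows "(\<Sum>j\<in>J. (w j)\<^sup>2) \<le> (2 * s1)\<^sup>2"
proof -
  define nw where "nw = sqrt (\<Sum>j\<in>J. (w j)\<^sup>2)"
  have nw0: "nw \<ge> 0" by (simp add: nw_def sum_nonneg)
  have nw2: "nw\<^sup>2 = (\<Sum>j\<in>J. (w j)\<^sup>2)" by (simp add: nw_def sum_nonneg)
  have "nw \<le> 2 * s1"
  proof (cases "nw = 0")
    case True then show ?thesis using s1 by simp
  next
    case False
    then have nwp: "nw > 0" using nw0 by simp
    define u where "u j = w j / nw" for j
    have u1: "(\<Sum>j\<in>J. (u j)\<^sup>2) = 1"
    proof -
      have "(\<Sum>j\<in>J. (u j)\<^sup>2) = (\<Sum>j\<in>J. (w j)\<^sup>2) / nw\<^sup>2"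
        by (simp add: u_def power_divide sum_divide_distrib[symmetric])
      then show ?thesis using nwp by (simp add: nw2[symmetric])
    qed
    obtain v where v: "v \<in> gridnet J (1/2)" and uv: "(\<Sum>j\<in>J. (u j - v j)\<^sup>2) \<le> (1/2)\<^sup>2"
      using gridnet_approx[OF fin, of "1/2" u] u1 by auto
    have "nw = (\<Sum>j\<in>J. w j * u j)"
    proof -
      have "(\<Sum>j\<in>J. w j * u j) = (\<Sum>j\<in>J. (w j)\<^sup>2) / nw"
        by (simp add: u_def sum_divide_distrib[symmetric] power2_eq_square)
      also have "\<dots> = nw\<^sup>2 / nw" by (simp only: nw2)
      also have "\<dots> = nw" using nwp by (simp add: power2_eq_square)
      finally show ?thesis by simp
    qed
    also have "\<dots> = (\<Sum>j\<in>J. w j * v j) + (\<Sum>j\<in>J. w j * (u j - v j))"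
      by (simp add: sum.distrib[symmetric] algebra_simps)
    finally have e: "nw = (\<Sum>j\<in>J. w j * v j) + (\<Sum>j\<in>J. w j * (u j - v j))" .
    have c1: "(\<Sum>j\<in>J. w j * (u j - v j)) \<le> nw * sqrt (\<Sum>j\<in>J. (u j - v j)\<^sup>2)"
      using CS_abs[of w "\<lambda>j. u j - v j" J] by (simp add: nw_def)
    have c2: "sqrt (\<Sum>j\<in>J. (u j - v j)\<^sup>2) \<le> 1/2"
      using real_sqrt_le_mono[OF uv] by simp
    have c3: "nw * sqrt (\<Sum>j\<in>J. (u j - v j)\<^sup>2) \<le> nw * (1/2)"
      using c2 nw0 by (rule mult_left_mono)
    have "nw < s1 + nw * (1/2)" using e c1 c3 net[OF v] by linarith
    then show ?thesis by simp
  qed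
  then have "nw\<^sup>2 \<le> (2 * s1)\<^sup>2" using nw0 by (intro power_mono) auto
  then show ?thesis using nw2 by simp
qed

lemma row_CS:
  fixes X :: "nat \<times> nat \<Rightarrow> real"
  shows "(\<Sum>j\<in>J. X (i,j) * u j)\<^sup>2 \<le> (\<Sum>j\<in>J. (X (i,j))\<^sup>2) * (\<Sum>j\<in>J. (u j)\<^sup>2)"
  by (rule Cauchy_Schwarz_ineq_sum)

lemma sqrt_sum_le2: "(\<Sum>j\<in>J. (z j)\<^sup>2) \<le> 4 \<Longrightarrow> sqrt (\<Sum>j\<in>J. (z j)\<^sup>2) \<le> (2::real)"
  using real_sqrt_le_mono[of _ 4] by (simp add: real_sqrt_four)

lemma det_D2:
  fixes X :: "nat \<times> nat \<Rightarrow> real"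
  assumes finG: "finite G" and finJ: "finite J" and s2: "s2 \<ge> 0"
    and net: "\<And>z v. z \<in> gridnet G (1/6) \<Longrightarrow> v \<in> gridnet J (1/6) \<Longrightarrow> (\<Sum>i\<in>G. z i * (\<Sum>j\<in>J. X (i,j) * v j)) < s2"
  shows "(\<Sum>i\<in>G. (\<Sum>j\<in>J. X (i,j) * u j)\<^sup>2) \<le> (2 * s2)\<^sup>2 * (\<Sum>j\<in>J. (u j)\<^sup>2)"
proof -
  define Xm where "Xm u i = (\<Sum>j\<in>J. X (i,j) * u j)" for u :: "nat \<Rightarrow> real" and i
  define Q where "Q u = sqrt (\<Sum>i\<in>G. (Xm u i)\<^sup>2)" for u
  define nrm where "nrm u = sqrt (\<Sum>j\<in>J. (u j)\<^sup>2)" for u :: "nat \<Rightarrow> real"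
  define U where "U = {u::nat\<Rightarrow>real. (\<Sum>j\<in>J. (u j)\<^sup>2) \<le> 1}"
  define Ms where "Ms = Sup (Q ` U)"
  define F where "F = sqrt (\<Sum>i\<in>G. \<Sum>j\<in>J. (X (i,j))\<^sup>2)"
  have Q0: "Q u \<ge> 0" for u by (simp add: Q_def sum_nonneg)
  have Xm_diff: "Xm (\<lambda>j. u j - v j) i = Xm u i - Xm v i" for u v i
    by (simp add: Xm_def sum_subtractf right_diff_distrib)
  have Xm_scale: "Xm (\<lambda>j. u j / c) i = Xm u i / c" for u c i
    by (simp add: Xm_def sum_divide_distrib)
  have bdd: "Q u \<le> F" if "u \<in> U" for u
  proof -
    have "(\<Sum>i\<in>G. (Xm u i)\<^sup>2) \<le> (\<Sum>i\<in>G. \<Sum>j\<in>J. (X (i,j))\<^sup>2)"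
    proof (rule sum_mono)
      fix i
      have "(Xm u i)\<^sup>2 \<le> (\<Sum>j\<in>J. (X (i,j))\<^sup>2) * (\<Sum>j\<in>J. (u j)\<^sup>2)" unfolding Xm_def by (rule row_CS)
      also have "\<dots> \<le> (\<Sum>j\<in>J. (X (i,j))\<^sup>2) * 1" using that by (intro mult_left_mono) (auto simp: U_def sum_nonneg)
      finally show "(Xm u i)\<^sup>2 \<le> (\<Sum>j\<in>J. (X (i,j))\<^sup>2)" by simp
    qed
    then show ?thesis unfolding Q_def F_def by (rule real_sqrt_le_mono)
  qed
  have bddQ: "bdd_above (Q ` U)" by (rule bdd_aboveI[of _ F]) (use bdd in auto)
  have zU: "(\<lambda>_. 0) \<in> U" by (simp add: U_def)
  have QleMs: "Q u \<le> Ms" if "u \<in> U" for u unfolding Ms_def using bddQ that by (intro cSup_upper) auto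
  have Ms0: "Ms \<ge> 0" using QleMs[OF zU] Q0 by (meson order_trans)
  have hom: "Q w \<le> Ms * nrm w" for w
  proof (cases "nrm w = 0")
    case True
    then have "(\<Sum>j\<in>J. (w j)\<^sup>2) = 0" by (simp add: nrm_def sum_nonneg)
    then have "\<forall>j\<in>J. w j = 0" using finJ by (simp add: sum_nonneg_eq_0_iff)
    then have "Xm w i = 0" for i by (simp add: Xm_def)
    then show ?thesis using True by (simp add: Q_def)
  next
    case False
    have "nrm w \<ge> 0" by (simp add: nrm_def sum_nonneg)
    then have np: "nrm w > 0" using False by simp
    define w' where "w' j = w j / nrm w" for j
    have "(\<Sum>j\<in>J. (w' j)\<^sup>2) = (\<Sum>j\<in>J. (w j)\<^sup>2) / (nrm w)\<^sup>2"
      by (simp add: w'_def power_divide sum_divide_distrib)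
    also have "\<dots> = 1" using np by (simp add: nrm_def sum_nonneg)
    finally have w'U: "w' \<in> U" by (simp add: U_def)
    have "Q w' = Q w / nrm w"
    proof -
      have "Q w' = sqrt (\<Sum>i\<in>G. (Xm w i)\<^sup>2 / (nrm w)\<^sup>2)"
        unfolding Q_def w'_def Xm_scale by (simp add: power_divide)
      also have "\<dots> = sqrt ((\<Sum>i\<in>G. (Xm w i)\<^sup>2) / (nrm w)\<^sup>2)" by (simp add: sum_divide_distrib)
      also have "\<dots> = Q w / nrm w" using np by (simp add: Q_def real_sqrt_divide)
      finally show ?thesis .
    qed
    then have "Q w / nrm w \<le> Ms" using QleMs[OF w'U] by simp
    then show ?thesis using np by (simp add: pos_divide_le_eq)
  qed
  have main: "Q u \<le> s2 + Ms / 2" if uU: "u \<in> U" for u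
  proof (cases "Q u = 0")
    case True then show ?thesis using s2 Ms0 by simp
  next
    case False
    then have qp: "Q u > 0" using Q0[of u] by simp
    define z0 where "z0 i = Xm u i / Q u" for i
    have q2: "(Q u)\<^sup>2 = (\<Sum>i\<in>G. (Xm u i)\<^sup>2)" by (simp add: Q_def sum_nonneg)
    have z01: "(\<Sum>i\<in>G. (z0 i)\<^sup>2) \<le> 1"
    proof -
      have "(\<Sum>i\<in>G. (z0 i)\<^sup>2) = (\<Sum>i\<in>G. (Xm u i)\<^sup>2) / (Q u)\<^sup>2"
        by (simp add: z0_def power_divide sum_divide_distrib)
      also have "\<dots> = 1" using qp by (simp only: q2[symmetric]) simp
      finally show ?thesis by simp
    qed
    obtain z where z: "z \<in> gridnet G (1/6)" and zz: "(\<Sum>i\<in>G. (z0 i - z i)\<^sup>2) \<le> (1/6)\<^sup>2"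
      using gridnet_approx[OF finG, of "1/6" z0] z01 by auto
    obtain v where v: "v \<in> gridnet J (1/6)" and uv: "(\<Sum>j\<in>J. (u j - v j)\<^sup>2) \<le> (1/6)\<^sup>2"
      using gridnet_approx[OF finJ, of "1/6" u] uU by (auto simp: U_def)
    have z4: "(\<Sum>i\<in>G. (z i)\<^sup>2) \<le> 4" using z by (simp add: gridnet_def)
    have "Q u = (\<Sum>i\<in>G. z0 i * Xm u i)"
    proof -
      have "(\<Sum>i\<in>G. z0 i * Xm u i) = (\<Sum>i\<in>G. (Xm u i)\<^sup>2) / Q u"
        by (simp add: z0_def sum_divide_distrib power2_eq_square)
      also have "\<dots> = (Q u)\<^sup>2 / Q u" by (simp only: q2)
      also have "\<dots> = Q u" using qp by (simp add: power2_eq_square)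
      finally show ?thesis by simp
    qed
    also have "\<dots> = (\<Sum>i\<in>G. z i * Xm v i) + (\<Sum>i\<in>G. (z0 i - z i) * Xm u i) + (\<Sum>i\<in>G. z i * Xm (\<lambda>j. u j - v j) i)"
      by (simp add: Xm_diff sum.distrib[symmetric] algebra_simps)
    finally have e: "Q u = (\<Sum>i\<in>G. z i * Xm v i) + (\<Sum>i\<in>G. (z0 i - z i) * Xm u i) + (\<Sum>i\<in>G. z i * Xm (\<lambda>j. u j - v j) i)" .
    have t1: "(\<Sum>i\<in>G. z i * Xm v i) < s2" using net[OF z v] by (simp add: Xm_def)
    have t2: "(\<Sum>i\<in>G. (z0 i - z i) * Xm u i) \<le> Ms / 6"
    proof -
      have "(\<Sum>i\<in>G. (z0 i - z i) * Xm u i) \<le> sqrt (\<Sum>i\<in>G. (z0 i - z i)\<^sup>2) * Q u"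
        using CS_abs[of "\<lambda>i. z0 i - z i" "Xm u" G] by (simp add: Q_def)
      also have "\<dots> \<le> (1/6) * Ms"
        using real_sqrt_le_mono[OF zz] QleMs[OF uU] Q0 by (intro mult_mono) auto
      finally show ?thesis by simp
    qed
    have t3: "(\<Sum>i\<in>G. z i * Xm (\<lambda>j. u j - v j) i) \<le> 2 * (Ms * (1/6))"
    proof -
      have "(\<Sum>i\<in>G. z i * Xm (\<lambda>j. u j - v j) i) \<le> sqrt (\<Sum>i\<in>G. (z i)\<^sup>2) * Q (\<lambda>j. u j - v j)"
        using CS_abs[of z "Xm (\<lambda>j. u j - v j)" G] by (simp add: Q_def)
      also have "\<dots> \<le> 2 * (Ms * nrm (\<lambda>j. u j - v j))"
        using sqrt_sum_le2[OF z4] hom[of "\<lambda>j. u j - v j"] Q0 by (intro mult_mono) auto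
      also have "nrm (\<lambda>j. u j - v j) \<le> 1/6"
        using real_sqrt_le_mono[OF uv] by (simp add: nrm_def)
      then have "2 * (Ms * nrm (\<lambda>j. u j - v j)) \<le> 2 * (Ms * (1/6))"
        using Ms0 by (intro mult_left_mono) auto
      finally show ?thesis .
    qed
    show ?thesis using e t1 t2 t3 by linarith
  qed
  have "Ms \<le> s2 + Ms / 2" unfolding Ms_def
    using zU main by (intro cSup_least) (auto simp: Ms_def)
  then have Ms2: "Ms \<le> 2 * s2" by simp
  have nrm0: "nrm u \<ge> 0" by (simp add: nrm_def sum_nonneg)
  have "Ms * nrm u \<le> 2 * s2 * nrm u" using Ms2 nrm0 by (rule mult_right_mono)
  then have "Q u \<le> 2 * s2 * nrm u" using hom[of u] by linarith
  then have "(Q u)\<^sup>2 \<le> (2 * s2 * nrm u)\<^sup>2" using Q0 by (intro power_mono) auto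
  also have "(2 * s2 * nrm u)\<^sup>2 = (2 * s2)\<^sup>2 * (\<Sum>j\<in>J. (u j)\<^sup>2)"
    by (simp add: nrm_def sum_nonneg power_mult_distrib)
  also have "(Q u)\<^sup>2 = (\<Sum>i\<in>G. (Xm u i)\<^sup>2)" by (simp add: Q_def sum_nonneg)
  finally show ?thesis by (simp add: Xm_def)
qed

lemma sum_ind_card:
  assumes "finite A"
  shows "(\<Sum>i\<in>A. if P i then 1 else (0::real)) = real (card {i\<in>A. P i})"
  using assms by (simp add: sum.If_cases Collect_conj_eq Int_commute Collect_mem_eq)

lemma card_markov:
  fixes f :: "nat \<Rightarrow> real"
  assumes fin: "finite A" and a: "a > 0"
  shows "real (card {i\<in>A. a \<le> \<bar>f i\<bar>}) * a\<^sup>2 \<le> (\<Sum>i\<in>A. (f i)\<^sup>2)"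
proof -
  have "real (card {i\<in>A. a \<le> \<bar>f i\<bar>}) * a\<^sup>2 = (\<Sum>i\<in>{i\<in>A. a \<le> \<bar>f i\<bar>}. a\<^sup>2)" by simp
  also have "\<dots> \<le> (\<Sum>i\<in>{i\<in>A. a \<le> \<bar>f i\<bar>}. (f i)\<^sup>2)"
  proof (rule sum_mono)
    fix i assume "i \<in> {i\<in>A. a \<le> \<bar>f i\<bar>}"
    then have "a\<^sup>2 \<le> \<bar>f i\<bar>\<^sup>2" using a by (intro power_mono) auto
    then show "a\<^sup>2 \<le> (f i)\<^sup>2" by simp
  qed
  also have "\<dots> \<le> (\<Sum>i\<in>A. (f i)\<^sup>2)" by (rule sum_mono2) (use fin in auto)
  finally show ?thesis .
qed

lemma det_D3:
  fixes X :: "nat \<times> nat \<Rightarrow> real"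
  assumes finG: "finite G" and finJ: "finite J" and Kq: "Kq \<ge> 0"
    and op: "\<And>w. (\<Sum>i\<in>G. (\<Sum>j\<in>J. X (i,j) * w j)\<^sup>2) \<le> Kq * (\<Sum>j\<in>J. (w j)\<^sup>2)"
    and e3: "0 < e3" "e3 \<le> 1/2" and e3K: "1600 * Kq * e3\<^sup>2 \<le> real (card G) / 320"
    and net: "\<And>v. v \<in> gridnet J e3 \<Longrightarrow> 1/4 \<le> (\<Sum>j\<in>J. (v j)\<^sup>2) \<Longrightarrow>
        real (card G) / 160 < (\<Sum>i\<in>G. if 1/20 \<le> \<bar>\<Sum>j\<in>J. X (i,j) * v j\<bar> then 1 else (0::real))"
    and u1: "(\<Sum>j\<in>J. (u j)\<^sup>2) = 1"
  shows "real (card G) / 320 \<le> real (card {i\<in>G. 1/40 \<le> \<bar>\<Sum>j\<in>J. X (i,j) * u j\<bar>})"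
proof -
  define Xm where "Xm u i = (\<Sum>j\<in>J. X (i,j) * u j)" for u :: "nat \<Rightarrow> real" and i
  obtain v where v: "v \<in> gridnet J e3" and uv: "(\<Sum>j\<in>J. (u j - v j)\<^sup>2) \<le> e3\<^sup>2"
    using gridnet_approx[OF finJ e3(1), of u] e3 u1 by auto
  have "1 \<le> 2 * (\<Sum>j\<in>J. (v j)\<^sup>2) + 2 * (\<Sum>j\<in>J. (u j - v j)\<^sup>2)"
  proof -
    have "(\<Sum>j\<in>J. (u j)\<^sup>2) \<le> (\<Sum>j\<in>J. 2 * (v j)\<^sup>2 + 2 * (u j - v j)\<^sup>2)"
      by (rule sum_mono) (use sq_diff_le[of "v j" "v j - u j" for j] in \<open>auto simp: power2_commute\<close>)
    then show ?thesis using u1 by (simp add: sum.distrib sum_distrib_left)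
  qed
  moreover have "e3\<^sup>2 \<le> (1/2)\<^sup>2" using e3 by (intro power_mono) auto
  then have "e3\<^sup>2 \<le> 1/4" by (simp add: power_divide)
  ultimately have v4: "1/4 \<le> (\<Sum>j\<in>J. (v j)\<^sup>2)" using uv by linarith
  have netv: "real (card G) / 160 < real (card {i\<in>G. 1/20 \<le> \<bar>Xm v i\<bar>})"
    using net[OF v v4] by (simp add: sum_ind_card[OF finG] Xm_def)
  have sub: "{i\<in>G. 1/20 \<le> \<bar>Xm v i\<bar>} \<subseteq> {i\<in>G. 1/40 \<le> \<bar>Xm u i\<bar>} \<union> {i\<in>G. 1/40 \<le> \<bar>Xm (\<lambda>j. u j - v j) i\<bar>}"
  proof
    fix i assume i: "i \<in> {i\<in>G. 1/20 \<le> \<bar>Xm v i\<bar>}"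
    have "Xm (\<lambda>j. u j - v j) i = Xm u i - Xm v i"
      by (simp add: Xm_def sum_subtractf right_diff_distrib)
    moreover have "\<bar>Xm v i\<bar> \<le> \<bar>Xm u i\<bar> + \<bar>Xm u i - Xm v i\<bar>"
      using abs_triangle_ineq[of "Xm u i" "Xm v i - Xm u i"] by (simp add: abs_minus_commute)
    ultimately have "1/40 \<le> \<bar>Xm u i\<bar> \<or> 1/40 \<le> \<bar>Xm (\<lambda>j. u j - v j) i\<bar>" using i by auto
    then show "i \<in> {i\<in>G. 1/40 \<le> \<bar>Xm u i\<bar>} \<union> {i\<in>G. 1/40 \<le> \<bar>Xm (\<lambda>j. u j - v j) i\<bar>}"
      using i by blast
  qed
  have "real (card {i\<in>G. 1/20 \<le> \<bar>Xm v i\<bar>}) \<le> real (card ({i\<in>G. 1/40 \<le> \<bar>Xm u i\<bar>} \<union> {i\<in>G. 1/40 \<le> \<bar>Xm (\<lambda>j. u j - v j) i\<bar>}))"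
    using card_mono[OF _ sub] finG by simp
  also have "\<dots> \<le> real (card {i\<in>G. 1/40 \<le> \<bar>Xm u i\<bar>}) + real (card {i\<in>G. 1/40 \<le> \<bar>Xm (\<lambda>j. u j - v j) i\<bar>})"
  proof -
    have "card ({i\<in>G. 1/40 \<le> \<bar>Xm u i\<bar>} \<union> {i\<in>G. 1/40 \<le> \<bar>Xm (\<lambda>j. u j - v j) i\<bar>}) \<le> card {i\<in>G. 1/40 \<le> \<bar>Xm u i\<bar>} + card {i\<in>G. 1/40 \<le> \<bar>Xm (\<lambda>j. u j - v j) i\<bar>}"
      by (rule card_Un_le)
    then show ?thesis by (simp only: of_nat_add[symmetric] of_nat_le_iff)
  qed
  finally have c1: "real (card {i\<in>G. 1/20 \<le> \<bar>Xm v i\<bar>}) \<le> real (card {i\<in>G. 1/40 \<le> \<bar>Xm u i\<bar>}) + real (card {i\<in>G. 1/40 \<le> \<bar>Xm (\<lambda>j. u j - v j) i\<bar>})" .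
  have "real (card {i\<in>G. 1/40 \<le> \<bar>Xm (\<lambda>j. u j - v j) i\<bar>}) * (1/40)\<^sup>2 \<le> (\<Sum>i\<in>G. (Xm (\<lambda>j. u j - v j) i)\<^sup>2)"
    by (rule card_markov[OF finG]) simp
  also have "\<dots> \<le> Kq * (\<Sum>j\<in>J. (u j - v j)\<^sup>2)" unfolding Xm_def by (rule op)
  also have "\<dots> \<le> Kq * e3\<^sup>2" using uv Kq by (rule mult_left_mono)
  finally have "real (card {i\<in>G. 1/40 \<le> \<bar>Xm (\<lambda>j. u j - v j) i\<bar>}) * (1/1600) \<le> Kq * e3\<^sup>2" by (simp add: power_divide)
  then have "real (card {i\<in>G. 1/40 \<le> \<bar>Xm (\<lambda>j. u j - v j) i\<bar>}) \<le> 1600 * Kq * e3\<^sup>2" by linarith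
  then show ?thesis using c1 netv e3K by (simp add: Xm_def)
qed

lemma det_final:
  fixes X :: "nat \<times> nat \<Rightarrow> real" and \<eta> \<Delta> :: "nat \<Rightarrow> real" and I J G :: "nat set"
  assumes finI: "finite I" and finJ: "finite J" and Gdef: "G = {i\<in>I. \<bar>\<eta> i\<bar> \<le> 1}"
    and minz: "\<And>D. (\<Sum>i\<in>I. huber ((\<Sum>j\<in>J. X (i,j) * \<Delta> j) - \<eta> i)) \<le> (\<Sum>i\<in>I. huber ((\<Sum>j\<in>J. X (i,j) * D j) - \<eta> i))"
    and W: "W \<ge> 0" "(\<Sum>j\<in>J. (\<Sum>i\<in>I. psi (- \<eta> i) * X (i,j))\<^sup>2) \<le> W\<^sup>2"
    and op: "\<And>D. (\<Sum>i\<in>G. (\<Sum>j\<in>J. X (i,j) * D j)\<^sup>2) \<le> Kq * (\<Sum>j\<in>J. (D j)\<^sup>2)"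
    and cnt: "\<And>u. (\<Sum>j\<in>J. (u j)\<^sup>2) = 1 \<Longrightarrow> real (card G) / 320 \<le> real (card {i\<in>G. 1/40 \<le> \<bar>\<Sum>j\<in>J. X (i,j) * u j\<bar>})"
    and r: "r > 0" "Kq * r\<^sup>2 \<le> real (card G) / 640" "2048000 * W < real (card G) * r"
  shows "(\<Sum>j\<in>J. (\<Delta> j)\<^sup>2) \<le> r\<^sup>2"
proof (rule ccontr)
  assume "\<not> (\<Sum>j\<in>J. (\<Delta> j)\<^sup>2) \<le> r\<^sup>2"
  then have big: "r\<^sup>2 < (\<Sum>j\<in>J. (\<Delta> j)\<^sup>2)" by simp
  define m where "m = real (card G)"
  define nd where "nd = sqrt (\<Sum>j\<in>J. (\<Delta> j)\<^sup>2)"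
  have nd2: "nd\<^sup>2 = (\<Sum>j\<in>J. (\<Delta> j)\<^sup>2)" by (simp add: nd_def sum_nonneg)
  have "r < nd" using big r(1) unfolding nd_def by (metis abs_of_pos real_less_rsqrt)
  then have ndp: "nd > 0" using r(1) by simp
  define s where "s = r / nd"
  have s01: "0 \<le> s" "s \<le> 1" using r(1) ndp \<open>r < nd\<close> by (auto simp: s_def)
  define u where "u j = \<Delta> j / nd" for j
  define D where "D j = r * u j" for j
  have u1: "(\<Sum>j\<in>J. (u j)\<^sup>2) = 1"
  proof -
    have "(\<Sum>j\<in>J. (u j)\<^sup>2) = (\<Sum>j\<in>J. (\<Delta> j)\<^sup>2) / nd\<^sup>2" by (simp add: u_def power_divide sum_divide_distrib)
    then show ?thesis using ndp by (simp add: nd2[symmetric])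
  qed
  have D2: "(\<Sum>j\<in>J. (D j)\<^sup>2) = r\<^sup>2" by (simp add: D_def power_mult_distrib sum_distrib_left[symmetric] u1)
  define Xm where "Xm v i = (\<Sum>j\<in>J. X (i,j) * v j)" for v :: "nat \<Rightarrow> real" and i
  define t where "t i = Xm D i" for i
  have tu: "t i = r * Xm u i" for i by (simp add: t_def Xm_def D_def sum_distrib_left algebra_simps)
  have tD: "t i = s * Xm \<Delta> i" for i by (simp add: t_def Xm_def D_def u_def s_def sum_distrib_left algebra_simps)
  define F where "F v = (\<Sum>i\<in>I. huber (Xm v i - \<eta> i))" for v
  have F0: "F (\<lambda>_. 0) = (\<Sum>i\<in>I. huber (- \<eta> i))" by (simp add: F_def Xm_def)
  have FD0: "F \<Delta> \<le> F (\<lambda>_. 0)" using minz[of "\<lambda>_. 0"] by (simp add: F_def Xm_def)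
  have up: "F D \<le> F (\<lambda>_. 0)"
  proof -
    have "F D = (\<Sum>i\<in>I. huber ((1 - s) * (- \<eta> i) + s * (Xm \<Delta> i - \<eta> i)))"
      unfolding F_def by (intro sum.cong refl arg_cong[where f=huber]) (simp add: tD[unfolded t_def] algebra_simps)
    also have "\<dots> \<le> (\<Sum>i\<in>I. (1 - s) * huber (- \<eta> i) + s * huber (Xm \<Delta> i - \<eta> i))"
      by (rule sum_mono) (rule huber_convex[OF s01])
    also have "\<dots> = (1 - s) * F (\<lambda>_. 0) + s * F \<Delta>"
      by (simp add: F0 F_def sum.distrib sum_distrib_left)
    also have "\<dots> \<le> (1 - s) * F (\<lambda>_. 0) + s * F (\<lambda>_. 0)"
      using FD0 s01 by (intro add_left_mono mult_left_mono) auto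
    finally show ?thesis by (simp add: algebra_simps)
  qed
  define T where "T = {i\<in>G. 1/40 \<le> \<bar>Xm u i\<bar> \<and> \<bar>t i\<bar> \<le> 1}"
  have finG: "finite G" using finI by (simp add: Gdef)
  have TG: "T \<subseteq> G" by (auto simp: T_def)
  have GI: "G \<subseteq> I" by (auto simp: Gdef)
  have finT: "finite T" using finG TG finite_subset by blast
  have cardT: "m / 640 \<le> real (card T)"
  proof -
    define Bad where "Bad = {i\<in>G. 1 \<le> \<bar>t i\<bar>}"
    have "real (card Bad) * 1\<^sup>2 \<le> (\<Sum>i\<in>G. (t i)\<^sup>2)" unfolding Bad_def by (rule card_markov[OF finG]) simp
    also have "\<dots> \<le> Kq * r\<^sup>2" using op[of D] D2 by (simp add: t_def Xm_def)
    finally have cB: "real (card Bad) \<le> m / 640" using r(2) by (simp add: m_def)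
    have sub: "{i\<in>G. 1/40 \<le> \<bar>Xm u i\<bar>} \<subseteq> T \<union> Bad" by (auto simp: T_def Bad_def)
    have "real (card {i\<in>G. 1/40 \<le> \<bar>Xm u i\<bar>}) \<le> real (card (T \<union> Bad))"
      using card_mono[OF _ sub] finT finG by (simp add: Bad_def)
    also have "\<dots> \<le> real (card T) + real (card Bad)"
      using card_Un_le[of T Bad] by (simp only: of_nat_add[symmetric] of_nat_le_iff)
    finally show ?thesis using cnt[OF u1] cB by (simp add: m_def Xm_def)
  qed
  have pw: "huber (t i - \<eta> i) - huber (- \<eta> i) \<ge> psi (- \<eta> i) * t i + (if i \<in> T then (t i)\<^sup>2 / 2 else 0)" if "i \<in> I" for i
  proof (cases "i \<in> T")
    case True
    then have "\<bar>- \<eta> i\<bar> \<le> 1" "\<bar>(t i - \<eta> i) - (- \<eta> i)\<bar> \<le> 1" by (auto simp: T_def Gdef)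
    from huber_sub2[OF this] True show ?thesis by simp
  next
    case False
    from huber_sub[where a="- \<eta> i" and b="t i - \<eta> i"] False show ?thesis by simp
  qed
  have "F D - F (\<lambda>_. 0) = (\<Sum>i\<in>I. huber (t i - \<eta> i) - huber (- \<eta> i))"
    unfolding F0 by (simp add: F_def t_def sum_subtractf)
  also have "\<dots> \<ge> (\<Sum>i\<in>I. psi (- \<eta> i) * t i + (if i \<in> T then (t i)\<^sup>2 / 2 else 0))"
    by (rule sum_mono) (rule pw)
  finally have low: "F D - F (\<lambda>_. 0) \<ge> (\<Sum>i\<in>I. psi (- \<eta> i) * t i) + (\<Sum>i\<in>T. (t i)\<^sup>2 / 2)"
  proof -
    assume a: "(\<Sum>i\<in>I. psi (- \<eta> i) * t i + (if i \<in> T then (t i)\<^sup>2 / 2 else 0)) \<le> F D - F (\<lambda>_. 0)"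
    have "(\<Sum>i\<in>I. (if i \<in> T then (t i)\<^sup>2 / 2 else 0)) = (\<Sum>i\<in>T. (t i)\<^sup>2 / 2)"
      using TG GI finI by (simp add: sum.If_cases Int_absorb1)
    then show ?thesis using a by (simp add: sum.distrib)
  qed
  define w where "w j = (\<Sum>i\<in>I. psi (- \<eta> i) * X (i,j))" for j
  have lin: "(\<Sum>i\<in>I. psi (- \<eta> i) * t i) = (\<Sum>j\<in>J. w j * D j)"
    by (simp add: t_def Xm_def w_def sum_distrib_left sum_distrib_right mult.assoc) (rule sum.swap)
  have "\<bar>\<Sum>j\<in>J. w j * D j\<bar> \<le> sqrt (\<Sum>j\<in>J. (w j)\<^sup>2) * sqrt (\<Sum>j\<in>J. (D j)\<^sup>2)" by (rule CS_abs)
  also have "sqrt (\<Sum>j\<in>J. (D j)\<^sup>2) = r" using D2 r(1) by simp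
  also have "sqrt (\<Sum>j\<in>J. (w j)\<^sup>2) \<le> W"
    using real_sqrt_le_mono[OF W(2)] W(1) by (simp add: w_def)
  finally have l1: "(\<Sum>i\<in>I. psi (- \<eta> i) * t i) \<ge> - (W * r)" using lin r(1) by (simp add: mult_right_mono)
  have "(\<Sum>i\<in>T. (t i)\<^sup>2 / 2) \<ge> (\<Sum>i\<in>T. r\<^sup>2 / 3200)"
  proof (rule sum_mono)
    fix i assume "i \<in> T"
    then have "1/40 \<le> \<bar>Xm u i\<bar>" by (simp add: T_def)
    then have "(1/40)\<^sup>2 \<le> \<bar>Xm u i\<bar>\<^sup>2" by (intro power_mono) auto
    then have "r\<^sup>2 * (1/40)\<^sup>2 \<le> r\<^sup>2 * (Xm u i)\<^sup>2" by (intro mult_left_mono) auto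
    then show "r\<^sup>2 / 3200 \<le> (t i)\<^sup>2 / 2" by (simp add: tu power_mult_distrib power_divide)
  qed
  also have "(\<Sum>i\<in>T. r\<^sup>2 / 3200) = real (card T) * r\<^sup>2 / 3200" by simp
  also have "real (card T) * r\<^sup>2 / 3200 \<ge> (m / 640) * r\<^sup>2 / 3200"
    using cardT by (intro divide_right_mono mult_right_mono) auto
  finally have l2: "(\<Sum>i\<in>T. (t i)\<^sup>2 / 2) \<ge> m * r\<^sup>2 / 2048000" by simp
  have "0 < r * (m * r / 2048000 - W)" using r(1) r(3) by (intro mult_pos_pos) (auto simp: m_def)
  then have "0 < m * r\<^sup>2 / 2048000 - W * r" by (simp add: power2_eq_square algebra_simps)
  then show False using up low l1 l2 by linarith
qed

lemma union_bound:
  assumes "prob_space M" and fin: "finite N" and A: "\<And>v. v \<in> N \<Longrightarrow> A v \<in> sets M" and b: "\<And>v. v \<in> N \<Longrightarrow> measure M (A v) \<le> b"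
  shows "(\<Union>v\<in>N. A v) \<in> sets M" "measure M (\<Union>v\<in>N. A v) \<le> real (card N) * b"
proof -
  interpret prob_space M by fact
  show "(\<Union>v\<in>N. A v) \<in> sets M" using fin A by auto
  have "measure M (\<Union>v\<in>N. A v) \<le> (\<Sum>v\<in>N. measure M (A v))"
    by (rule finite_measure_subadditive_finite) (use fin A in auto)
  also have "\<dots> \<le> (\<Sum>v\<in>N. b)" by (rule sum_mono) (rule b)
  finally show "measure M (\<Union>v\<in>N. A v) \<le> real (card N) * b" by simp
qed

lemma sum_prod_sq:
  fixes a b :: "nat \<Rightarrow> real"
  shows "(\<Sum>k\<in>I\<times>J. (a (fst k) * b (snd k))\<^sup>2) = (\<Sum>i\<in>I. (a i)\<^sup>2) * (\<Sum>j\<in>J. (b j)\<^sup>2)"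
proof -
  have "(\<Sum>k\<in>I\<times>J. (a (fst k) * b (snd k))\<^sup>2) = (\<Sum>k\<in>I\<times>J. case k of (i,j) \<Rightarrow> (a i * b j)\<^sup>2)"
    by (rule sum.cong) auto
  also have "\<dots> = (\<Sum>i\<in>I. \<Sum>j\<in>J. (a i * b j)\<^sup>2)" by (rule sum.cartesian_product[symmetric])
  also have "\<dots> = (\<Sum>i\<in>I. (a i)\<^sup>2) * (\<Sum>j\<in>J. (b j)\<^sup>2)" by (simp add: power_mult_distrib sum_product)
  finally show ?thesis .
qed

lemma lin_set_meas:
  assumes "finite K"
  shows "{x\<in>space (PiM K (\<lambda>_. NG)). s \<le> (\<Sum>k\<in>K. c k * x k)} \<in> sets (PiM K (\<lambda>_. NG))"
proof -
  have "(\<lambda>x. \<Sum>k\<in>K. c k * x k) \<in> borel_measurable (PiM K (\<lambda>_. NG))"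
    by (intro borel_measurable_sum borel_measurable_times measurable_component_singleton) auto
  then show ?thesis by measurable
qed

lemma gA_ge1: "e \<noteq> 0 \<Longrightarrow> gA e \<ge> 1"
proof -
  assume e: "e \<noteq> 0"
  have "exp (- (e\<^sup>2/4)) < 1" using e by simp
  moreover have "0 < exp (- (e\<^sup>2/4))" by simp
  ultimately have "0 < 1 - exp (- (e\<^sup>2/4))" "1 - exp (- (e\<^sup>2/4)) \<le> 1" by auto
  then have "2 * exp 1 / 1 \<le> 2 * exp 1 / (1 - exp (- (e\<^sup>2/4)))"
    by (intro divide_left_mono) auto
  moreover have "1 \<le> 2 * exp (1::real)" using exp_ge_add_one_self[of "1::real"] by simp
  ultimately show ?thesis unfolding gA_def by simp
qed

lemma card_pow_exp:
  assumes "finite N" "real (card N) \<le> g ^ k" "g \<ge> 1"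
  shows "real (card N) \<le> exp (real k * ln g)"
proof -
  have "exp (real k * ln g) = exp (ln g) ^ k" by (rule exp_of_nat_mult)
  also have "\<dots> = g ^ k" using assms(3) by simp
  finally show ?thesis using assms(2) by simp
qed

lemma event1:
  fixes n d :: nat and \<psi> :: "nat \<Rightarrow> real" and s1 :: real
  assumes n: "n \<ge> 1" and psi: "\<And>i. \<bar>\<psi> i\<bar> \<le> 2" and s1: "s1 \<ge> 0"
  defines "M \<equiv> PiM ({..<n}\<times>{..<d}) (\<lambda>_. NG)"
  defines "B \<equiv> (\<Union>v\<in>gridnet {..<d} (1/2). {x\<in>space M. s1 \<le> (\<Sum>k\<in>{..<n}\<times>{..<d}. (\<psi> (fst k) * v (snd k)) * x k)})"
  shows "B \<in> sets M" "measure M B \<le> exp (real d * ln (gA (1/2)) - s1\<^sup>2 / (32 * real n))"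
proof -
  have fin: "finite ({..<n}\<times>{..<d})" by simp
  have fN: "finite (gridnet {..<d} (1/2)) \<and> real (card (gridnet {..<d} (1/2))) \<le> gA (1/2) ^ card {..<d::nat}"
    by (rule gridnet_card) auto
  have np: "real n > 0" using n by simp
  have each: "measure M {x\<in>space M. s1 \<le> (\<Sum>k\<in>{..<n}\<times>{..<d}. (\<psi> (fst k) * v (snd k)) * x k)} \<le> exp (- s1\<^sup>2 / (2 * (16 * real n)))"
    if v: "v \<in> gridnet {..<d} (1/2)" for v
    unfolding M_def
  proof (rule lin_tail[OF fin])
    show "0 < 16 * real n" using np by simp
    have "(\<Sum>k\<in>{..<n}\<times>{..<d}. (\<psi> (fst k) * v (snd k))\<^sup>2) = (\<Sum>i<n. (\<psi> i)\<^sup>2) * (\<Sum>j<d. (v j)\<^sup>2)"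
      by (rule sum_prod_sq)
    also have "\<dots> \<le> (4 * real n) * 4"
    proof (rule mult_mono)
      have "(\<Sum>i<n. (\<psi> i)\<^sup>2) \<le> (\<Sum>i<n. 4)"
      proof (rule sum_mono)
        fix i have "\<bar>\<psi> i\<bar>\<^sup>2 \<le> 2\<^sup>2" using psi[of i] by (intro power_mono) auto
        then show "(\<psi> i)\<^sup>2 \<le> 4" by simp
      qed
      then show "(\<Sum>i<n. (\<psi> i)\<^sup>2) \<le> 4 * real n" by simp
      show "(\<Sum>j<d. (v j)\<^sup>2) \<le> 4" using v by (simp add: gridnet_def)
    qed (auto simp: sum_nonneg)
    finally show "(\<Sum>k\<in>{..<n}\<times>{..<d}. (\<psi> (fst k) * v (snd k))\<^sup>2) \<le> 16 * real n" by simp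
  qed (rule s1)
  have ub: "B \<in> sets M" "measure M B \<le> real (card (gridnet {..<d} (1/2))) * exp (- s1\<^sup>2 / (2 * (16 * real n)))"
    unfolding B_def M_def
    using union_bound[OF prob_PiNG[of "{..<n}\<times>{..<d}"], where N="gridnet {..<d} (1/2)" and A="\<lambda>v. {x\<in>space M. s1 \<le> (\<Sum>k\<in>{..<n}\<times>{..<d}. (\<psi> (fst k) * v (snd k)) * x k)}" and b="exp (- s1\<^sup>2 / (2 * (16 * real n)))"]
      fN lin_set_meas[OF fin] each unfolding M_def by auto
  show "B \<in> sets M" by (rule ub(1))
  have "real (card (gridnet {..<d} (1/2))) \<le> exp (real d * ln (gA (1/2)))"
    using card_pow_exp[of "gridnet {..<d} (1/2)" "gA (1/2)" d] fN gA_ge1[of "1/2"] by simp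
  then have "measure M B \<le> exp (real d * ln (gA (1/2))) * exp (- s1\<^sup>2 / (2 * (16 * real n)))"
    using ub(2) by (meson exp_ge_zero mult_right_mono order_trans)
  also have "\<dots> = exp (real d * ln (gA (1/2)) - s1\<^sup>2 / (32 * real n))"
    by (simp add: exp_add[symmetric])
  finally show "measure M B \<le> exp (real d * ln (gA (1/2)) - s1\<^sup>2 / (32 * real n))" .
qed

lemma event2:
  fixes n d :: nat and G :: "nat set" and s2 :: real
  assumes G: "G \<subseteq> {..<n}" and s2: "s2 \<ge> 0"
  defines "M \<equiv> PiM ({..<n}\<times>{..<d}) (\<lambda>_. NG)"
  defines "B \<equiv> (\<Union>p\<in>gridnet G (1/6) \<times> gridnet {..<d} (1/6). {x\<in>space M. s2 \<le> (\<Sum>k\<in>{..<n}\<times>{..<d}. (fst p (fst k) * snd p (snd k)) * x k)})"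
  shows "B \<in> sets M" "measure M B \<le> exp ((real (card G) + real d) * ln (gA (1/6)) - s2\<^sup>2 / 32)"
proof -
  have fin: "finite ({..<n}\<times>{..<d})" by simp
  have finG: "finite G" using G finite_subset by blast
  have fN1: "finite (gridnet G (1/6)) \<and> real (card (gridnet G (1/6))) \<le> gA (1/6) ^ card G"
    by (rule gridnet_card[OF finG]) auto
  have fN2: "finite (gridnet {..<d} (1/6)) \<and> real (card (gridnet {..<d} (1/6))) \<le> gA (1/6) ^ card {..<d::nat}"
    by (rule gridnet_card) auto
  have each: "measure M {x\<in>space M. s2 \<le> (\<Sum>k\<in>{..<n}\<times>{..<d}. (fst p (fst k) * snd p (snd k)) * x k)} \<le> exp (- s2\<^sup>2 / (2 * 16))"
    if p: "p \<in> gridnet G (1/6) \<times> gridnet {..<d} (1/6)" for p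
    unfolding M_def
  proof (rule lin_tail[OF fin])
    obtain z v where pz: "p = (z, v)" "z \<in> gridnet G (1/6)" "v \<in> gridnet {..<d} (1/6)" using p by auto
    have "(\<Sum>k\<in>{..<n}\<times>{..<d}. (fst p (fst k) * snd p (snd k))\<^sup>2) = (\<Sum>i<n. (z i)\<^sup>2) * (\<Sum>j<d. (v j)\<^sup>2)"
      unfolding pz(1) fst_conv snd_conv by (rule sum_prod_sq)
    also have "(\<Sum>i<n. (z i)\<^sup>2) = (\<Sum>i\<in>G. (z i)\<^sup>2)"
      by (rule sum.mono_neutral_right) (use G pz(2) in \<open>auto simp: gridnet_def\<close>)
    also have "(\<Sum>i\<in>G. (z i)\<^sup>2) * (\<Sum>j<d. (v j)\<^sup>2) \<le> 4 * 4"
      using pz(2,3) by (intro mult_mono) (auto simp: gridnet_def sum_nonneg)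
    finally show "(\<Sum>k\<in>{..<n}\<times>{..<d}. (fst p (fst k) * snd p (snd k))\<^sup>2) \<le> 16" by simp
  qed (use s2 in auto)
  have ub: "B \<in> sets M" "measure M B \<le> real (card (gridnet G (1/6) \<times> gridnet {..<d} (1/6))) * exp (- s2\<^sup>2 / (2 * 16))"
    unfolding B_def M_def
    using union_bound[OF prob_PiNG[of "{..<n}\<times>{..<d}"], where N="gridnet G (1/6) \<times> gridnet {..<d} (1/6)" and A="\<lambda>p. {x\<in>space M. s2 \<le> (\<Sum>k\<in>{..<n}\<times>{..<d}. (fst p (fst k) * snd p (snd k)) * x k)}" and b="exp (- s2\<^sup>2 / (2 * 16))"]
      fN1 fN2 lin_set_meas[OF fin] each unfolding M_def by auto
  show "B \<in> sets M" by (rule ub(1))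
  have c1: "real (card (gridnet G (1/6))) \<le> exp (real (card G) * ln (gA (1/6)))"
    using card_pow_exp[of "gridnet G (1/6)" "gA (1/6)" "card G"] fN1 gA_ge1[of "1/6"] by simp
  have c2: "real (card (gridnet {..<d} (1/6))) \<le> exp (real d * ln (gA (1/6)))"
    using card_pow_exp[of "gridnet {..<d} (1/6)" "gA (1/6)" d] fN2 gA_ge1[of "1/6"] by simp
  have "real (card (gridnet G (1/6) \<times> gridnet {..<d} (1/6))) \<le> exp (real (card G) * ln (gA (1/6))) * exp (real d * ln (gA (1/6)))"
    by (simp add: card_cartesian_product) (intro mult_mono c1 c2, auto)
  also have "\<dots> = exp ((real (card G) + real d) * ln (gA (1/6)))" by (simp add: exp_add[symmetric] algebra_simps)
  finally have "measure M B \<le> exp ((real (card G) + real d) * ln (gA (1/6))) * exp (- s2\<^sup>2 / (2 * 16))"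
    using ub(2) by (meson exp_ge_zero mult_right_mono order_trans)
  also have "\<dots> = exp ((real (card G) + real d) * ln (gA (1/6)) - s2\<^sup>2 / 32)"
    by (simp add: exp_add[symmetric])
  finally show "measure M B \<le> exp ((real (card G) + real d) * ln (gA (1/6)) - s2\<^sup>2 / 32)" .
qed

lemma event3:
  fixes n d :: nat and G :: "nat set" and e3 :: real
  assumes G: "G \<subseteq> {..<n}" and n: "n \<ge> 1" and d: "d \<ge> 1" and e3: "e3 > 0"
  defines "M \<equiv> PiM ({..<n}\<times>{..<d}) (\<lambda>_. NG)"
  defines "B \<equiv> (\<Union>v\<in>{v\<in>gridnet {..<d} e3. 1/4 \<le> (\<Sum>j<d. (v j)\<^sup>2)}. {x\<in>space M.
      (\<Sum>i\<in>G. (if 1/20 \<le> \<bar>\<Sum>j<d. x (i,j) * v j\<bar> then 1 else (0::real))) \<le> (1/40) * card G / 4})"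
  shows "B \<in> sets M" "measure M B \<le> exp (real d * ln (gA e3) - real (card G) / 160)"
proof -
  have fin: "finite ({..<n}\<times>{..<d})" by simp
  have ne: "{..<n}\<times>{..<d} \<noteq> {}" using n d by (auto simp: lessThan_empty_iff)
  have fN: "finite (gridnet {..<d} e3) \<and> real (card (gridnet {..<d} e3)) \<le> gA e3 ^ card {..<d::nat}"
    by (rule gridnet_card) (use e3 in auto)
  let ?N = "{v\<in>gridnet {..<d} e3. 1/4 \<le> (\<Sum>j<d. (v j)\<^sup>2)}"
  have finN: "finite ?N" using fN by simp
  have cN: "real (card ?N) \<le> real (card (gridnet {..<d} e3))"
    using fN by (simp add: card_mono)
  have meas: "{x\<in>space M. (\<Sum>i\<in>G. (if 1/20 \<le> \<bar>\<Sum>j<d. x (i,j) * v j\<bar> then 1 else (0::real))) \<le> (1/40) * card G / 4} \<in> sets M" for v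
  proof -
    have [measurable]: "(\<lambda>x. \<Sum>j<d. x (i,j) * v j) \<in> borel_measurable M" if "i \<in> G" for i
      unfolding M_def using that G by (intro borel_measurable_sum borel_measurable_times measurable_component_singleton) auto
    have "(\<lambda>x. (\<Sum>i\<in>G. (if 1/20 \<le> \<bar>\<Sum>j<d. x (i,j) * v j\<bar> then 1 else (0::real)))) \<in> borel_measurable M"
      by (rule borel_measurable_sum) measurable
    then show ?thesis by measurable
  qed
  have each: "measure M {x\<in>space M. (\<Sum>i\<in>G. (if 1/20 \<le> \<bar>\<Sum>j<d. x (i,j) * v j\<bar> then 1 else (0::real))) \<le> (1/40) * card G / 4}
      \<le> exp (- ((1/40) * card G / 4))" if v: "v \<in> ?N" for v
    unfolding M_def
  proof (rule chernoff_rows[OF _ _ ne G])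
    fix i assume "i \<in> G"
    then have "i \<in> {..<n}" using G by auto
    then show "1/40 \<le> (\<integral>x. (if 1/20 \<le> \<bar>\<Sum>j<d. x (i,j) * v j\<bar> then 1 else (0::real)) \<partial>PiM ({..<n}\<times>{..<d}) (\<lambda>_. NG))"
      by (rule anti_conc) (use v in \<open>auto simp: gridnet_def\<close>)
  qed auto
  have ub: "B \<in> sets M" "measure M B \<le> real (card ?N) * exp (- ((1/40) * card G / 4))"
    unfolding B_def
    using union_bound[OF prob_PiNG[of "{..<n}\<times>{..<d}"], where N="?N" and A="\<lambda>v. {x\<in>space M.
      (\<Sum>i\<in>G. (if 1/20 \<le> \<bar>\<Sum>j<d. x (i,j) * v j\<bar> then 1 else (0::real))) \<le> (1/40) * card G / 4}" and b="exp (- ((1/40) * card G / 4))"]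
      finN meas each unfolding M_def by auto
  show "B \<in> sets M" by (rule ub(1))
  have "real (card (gridnet {..<d} e3)) \<le> exp (real d * ln (gA e3))"
    using card_pow_exp[of "gridnet {..<d} e3" "gA e3" d] fN gA_ge1[of e3] e3 by simp
  then have "measure M B \<le> exp (real d * ln (gA e3)) * exp (- ((1/40) * card G / 4))"
    using ub(2) cN by (meson exp_ge_zero mult_right_mono order_trans)
  also have "\<dots> = exp (real d * ln (gA e3) - real (card G) / 160)"
    by (simp add: exp_add[symmetric])
  finally show "measure M B \<le> exp (real d * ln (gA e3) - real (card G) / 160)" .
qed

lemma rearr:
  fixes a b :: "nat \<Rightarrow> real" and X :: "nat \<times> nat \<Rightarrow> real"
  shows "(\<Sum>k\<in>I\<times>J. (a (fst k) * b (snd k)) * X k) = (\<Sum>i\<in>I. a i * (\<Sum>j\<in>J. X (i,j) * b j))"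
proof -
  have "(\<Sum>k\<in>I\<times>J. (a (fst k) * b (snd k)) * X k) = (\<Sum>k\<in>I\<times>J. case k of (i,j) \<Rightarrow> (a i * b j) * X (i,j))"
    by (rule sum.cong) auto
  also have "\<dots> = (\<Sum>i\<in>I. \<Sum>j\<in>J. (a i * b j) * X (i,j))" by (rule sum.cartesian_product[symmetric])
  also have "\<dots> = (\<Sum>i\<in>I. a i * (\<Sum>j\<in>J. X (i,j) * b j))" by (simp add: sum_distrib_left algebra_simps)
  finally show ?thesis .
qed

lemma main_det:
  fixes X :: "nat \<times> nat \<Rightarrow> real" and \<eta> \<beta>s \<beta>h :: "nat \<Rightarrow> real" and n d :: nat and G :: "nat set"
  assumes n: "n \<ge> 1" and Gdef: "G = {i\<in>{..<n}. \<bar>\<eta> i\<bar> \<le> 1}"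
    and s1: "s1 \<ge> 0" and s2: "s2 \<ge> 0" and e3: "e3 > 0" "e3 \<le> 1/2"
    and e3K: "1600 * (2 * s2)\<^sup>2 * e3\<^sup>2 \<le> real (card G) / 320"
    and r: "r > 0" "(2 * s2)\<^sup>2 * r\<^sup>2 \<le> real (card G) / 640" "2048000 * (2 * s1) < real (card G) * r"
    and N1: "\<And>v. v \<in> gridnet {..<d} (1/2) \<Longrightarrow> \<not> (s1 \<le> (\<Sum>k\<in>{..<n}\<times>{..<d}. (psi (- \<eta> (fst k)) * v (snd k)) * X k))"
    and N2: "\<And>p. p \<in> gridnet G (1/6) \<times> gridnet {..<d} (1/6) \<Longrightarrow> \<not> (s2 \<le> (\<Sum>k\<in>{..<n}\<times>{..<d}. (fst p (fst k) * snd p (snd k)) * X k))"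
    and N3: "\<And>v. v \<in> {v\<in>gridnet {..<d} e3. 1/4 \<le> (\<Sum>j<d. (v j)\<^sup>2)} \<Longrightarrow>
        \<not> ((\<Sum>i\<in>G. (if 1/20 \<le> \<bar>\<Sum>j<d. X (i,j) * v j\<bar> then 1 else (0::real))) \<le> (1/40) * card G / 4)"
    and mn: "\<And>\<beta>. huber_loss n d X (\<lambda>i. (\<Sum>j<d. X (i, j) * \<beta>s j) + \<eta> i) \<beta>h \<le> huber_loss n d X (\<lambda>i. (\<Sum>j<d. X (i, j) * \<beta>s j) + \<eta> i) \<beta>"
  shows "(\<Sum>j<d. (\<beta>s j - \<beta>h j)\<^sup>2) \<le> r\<^sup>2"
proof -
  have finG: "finite G" by (simp add: Gdef)
  have GI: "G \<subseteq> {..<n}" by (auto simp: Gdef)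
  define w where "w j = (\<Sum>i<n. psi (- \<eta> i) * X (i,j))" for j
  have D1: "(\<Sum>j<d. (w j)\<^sup>2) \<le> (2 * s1)\<^sup>2"
  proof (rule det_D1[OF _ s1])
    fix v assume v: "v \<in> gridnet {..<d} (1/2)"
    have "(\<Sum>k\<in>{..<n}\<times>{..<d}. (psi (- \<eta> (fst k)) * v (snd k)) * X k) = (\<Sum>i<n. psi (- \<eta> i) * (\<Sum>j<d. X (i,j) * v j))"
      by (rule rearr)
    also have "\<dots> = (\<Sum>j<d. w j * v j)"
      unfolding w_def by (simp add: sum_distrib_left sum_distrib_right algebra_simps) (rule sum.swap)
    finally have "(\<Sum>k\<in>{..<n}\<times>{..<d}. (psi (- \<eta> (fst k)) * v (snd k)) * X k) = (\<Sum>j<d. w j * v j)" .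
    then show "(\<Sum>j<d. w j * v j) < s1" using N1[OF v] by simp
  qed simp
  have D2: "(\<Sum>i\<in>G. (\<Sum>j<d. X (i,j) * u j)\<^sup>2) \<le> (2 * s2)\<^sup>2 * (\<Sum>j<d. (u j)\<^sup>2)" for u
  proof (rule det_D2[OF finG _ s2])
    fix z v assume z: "z \<in> gridnet G (1/6)" and v: "v \<in> gridnet {..<d} (1/6)"
    have "(\<Sum>k\<in>{..<n}\<times>{..<d}. (z (fst k) * v (snd k)) * X k) = (\<Sum>i<n. z i * (\<Sum>j<d. X (i,j) * v j))"
      by (rule rearr)
    also have "\<dots> = (\<Sum>i\<in>G. z i * (\<Sum>j<d. X (i,j) * v j))"
      by (rule sum.mono_neutral_right) (use GI z in \<open>auto simp: gridnet_def\<close>)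
    finally show "(\<Sum>i\<in>G. z i * (\<Sum>j<d. X (i,j) * v j)) < s2" using N2[of "(z,v)"] z v by auto
  qed simp
  have D3: "real (card G) / 320 \<le> real (card {i\<in>G. 1/40 \<le> \<bar>\<Sum>j<d. X (i,j) * u j\<bar>})"
    if u1: "(\<Sum>j<d. (u j)\<^sup>2) = 1" for u
  proof (rule det_D3[OF finG _ _ D2 e3 e3K _ u1])
    fix v assume "v \<in> gridnet {..<d} e3" "1/4 \<le> (\<Sum>j<d. (v j)\<^sup>2)"
    then show "real (card G) / 160 < (\<Sum>i\<in>G. if 1/20 \<le> \<bar>\<Sum>j<d. X (i,j) * v j\<bar> then 1 else (0::real))"
      using N3[of v] by auto
  qed auto
  define \<Delta> where "\<Delta> j = \<beta>h j - \<beta>s j" for j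
  have minz: "(\<Sum>i<n. huber ((\<Sum>j<d. X (i,j) * \<Delta> j) - \<eta> i)) \<le> (\<Sum>i<n. huber ((\<Sum>j<d. X (i,j) * D j) - \<eta> i))" for D
  proof -
    have e: "huber_loss n d X (\<lambda>i. (\<Sum>j<d. X (i, j) * \<beta>s j) + \<eta> i) \<beta> = (1 / real n) * (\<Sum>i<n. huber ((\<Sum>j<d. X (i,j) * (\<beta> j - \<beta>s j)) - \<eta> i))" for \<beta>
      unfolding huber_loss_def
      by (intro arg_cong[where f="\<lambda>x. (1 / real n) * x"] sum.cong refl arg_cong[where f=huber])
         (simp add: right_diff_distrib sum_subtractf)
    have "(1 / real n) * (\<Sum>i<n. huber ((\<Sum>j<d. X (i,j) * \<Delta> j) - \<eta> i)) \<le> (1 / real n) * (\<Sum>i<n. huber ((\<Sum>j<d. X (i,j) * D j) - \<eta> i))"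
      using mn[of "\<lambda>j. \<beta>s j + D j"] unfolding e by (simp add: \<Delta>_def)
    moreover have "0 < 1 / real n" using n by simp
    ultimately show ?thesis by (rule mult_left_le_imp_le)
  qed
  have "(\<Sum>j<d. (\<Delta> j)\<^sup>2) \<le> r\<^sup>2"
  proof (rule det_final[OF _ _ Gdef minz _ _ _ _ r])
    show "(\<Sum>j<d. (\<Sum>i<n. psi (- \<eta> i) * X (i,j))\<^sup>2) \<le> (2 * s1)\<^sup>2" using D1 by (simp add: w_def)
    show "\<And>D. (\<Sum>i\<in>G. (\<Sum>j<d. X (i,j) * D j)\<^sup>2) \<le> (2 * s2)\<^sup>2 * (\<Sum>j<d. (D j)\<^sup>2)" by (rule D2)
    show "\<And>u. (\<Sum>j<d. (u j)\<^sup>2) = 1 \<Longrightarrow> real (card G) / 320 \<le> real (card {i\<in>G. 1/40 \<le> \<bar>\<Sum>j<d. X (i,j) * u j\<bar>})" by (rule D3)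
  qed (use s1 in auto)
  then show ?thesis by (simp add: \<Delta>_def power2_commute)
qed

theorem mainTheorem1:
  shows "\<exists>C C'. C > 0 \<and> C' > 0 \<and>
    (\<forall>(n::nat) (d::nat) (\<alpha>::real) (\<eta>::nat \<Rightarrow> real) (\<delta>::real).
      n \<ge> 1 \<longrightarrow> d \<ge> 1 \<longrightarrow> 0 < \<alpha> \<longrightarrow> \<alpha> \<le> 1 \<longrightarrow>
      real (card {i\<in>{..<n}. \<bar>\<eta> i\<bar> \<le> 1}) \<ge> \<alpha> * real n \<longrightarrow>
      0 < \<delta> \<longrightarrow> \<delta> < 1 \<longrightarrow>
      real n \<ge> C * (real d + ln (2 / \<delta>)) / \<alpha>\<^sup>2 \<longrightarrow>
      (\<exists>A \<in> sets (gauss_matrix n d).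
         measure (gauss_matrix n d) A \<ge> 1 - \<delta> \<and>
         (\<forall>X\<in>A. \<forall>\<beta>s::nat \<Rightarrow> real. \<forall>\<beta>h::nat \<Rightarrow> real.
            (let y = (\<lambda>i. (\<Sum>j<d. X (i, j) * \<beta>s j) + \<eta> i) in
              (\<forall>\<beta>. huber_loss n d X y \<beta>h \<le> huber_loss n d X y \<beta>) \<longrightarrow>
              (\<Sum>j<d. (\<beta>s j - \<beta>h j)\<^sup>2) \<le> C' * (real d + ln (2 / \<delta>)) / (\<alpha>\<^sup>2 * real n)))))"
proof -
  define a1 where "a1 = ln (gA (1/2))"
  define a2 where "a2 = ln (gA (1/6))"
  define \<kappa> where "\<kappa> = 128 * (2 * a2 + 2)"
  define e3 where "e3 = 1 / (1000 * sqrt \<kappa>)"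
  define a3 where "a3 = ln (gA e3)"
  define c1 where "c1 = 128 * (a1 + 1)"
  define C' where "C' = 2 * 2048000\<^sup>2 * c1"
  define C where "C = 640 * \<kappa> * C' + 160 * (a3 + 2) + 1"
  have a1: "a1 \<ge> 0" unfolding a1_def using gA_ge1[of "1/2"] by simp
  have a2: "a2 \<ge> 0" unfolding a2_def using gA_ge1[of "1/6"] by simp
  have \<kappa>: "\<kappa> \<ge> 256" using a2 by (simp add: \<kappa>_def)
  have sk: "sqrt \<kappa> \<ge> 1" using \<kappa> by simp
  have e3p: "e3 > 0" using sk by (simp add: e3_def)
  have e3h: "e3 \<le> 1/2"
  proof -
    have "1 \<le> sqrt \<kappa> * 500" using sk by linarith
    then show ?thesis unfolding e3_def using \<kappa> by (simp add: field_simps divide_le_eq_1)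
  qed
  have e3sq: "e3\<^sup>2 * \<kappa> = 1 / 1000000" using \<kappa> by (simp add: e3_def power_divide power_mult_distrib)
  have a3: "a3 \<ge> 0" unfolding a3_def using gA_ge1[of e3] e3p by simp
  have c1: "c1 > 0" using a1 by (simp add: c1_def)
  have C'p: "C' > 0" using c1 by (simp add: C'_def)
  have Cge: "C \<ge> 640 * \<kappa> * C'" "C \<ge> 160 * (a3 + 2)" "C \<ge> 1"
    using \<kappa> C'p a3 by (auto simp: C_def)
  have Cp: "C > 0" using Cge by simp
  show ?thesis
  proof (rule exI[of _ C], rule exI[of _ C'], intro conjI Cp C'p allI impI)
    fix n d :: nat and \<alpha> :: real and \<eta> :: "nat \<Rightarrow> real" and \<delta> :: real
    assume n: "n \<ge> 1" and d: "d \<ge> 1" and \<alpha>0: "0 < \<alpha>" and \<alpha>1: "\<alpha> \<le> 1"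
      and cardG: "real (card {i\<in>{..<n}. \<bar>\<eta> i\<bar> \<le> 1}) \<ge> \<alpha> * real n"
      and \<delta>0: "0 < \<delta>" and \<delta>1: "\<delta> < 1"
      and nC: "real n \<ge> C * (real d + ln (2 / \<delta>)) / \<alpha>\<^sup>2"
    define G where "G = {i\<in>{..<n}. \<bar>\<eta> i\<bar> \<le> 1}"
    define m where "m = real (card G)"
    define L where "L = ln (2 / \<delta>)"
    have L2: "L \<ge> ln 2" using \<delta>0 \<delta>1 by (simp add: L_def field_simps)
    have ln2: "ln (2::real) \<le> 1" using ln_le_minus_one[of "2::real"] by simp
    have ln2p: "ln (2::real) > 0" by simp
    have Lp: "L > 0" using L2 ln2p by linarith
    have eL: "exp (- L) = \<delta> / 2" using \<delta>0 by (simp add: L_def exp_minus)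
    have eL2: "exp (- L - ln 2) = \<delta> / 4" using eL by (simp add: exp_diff exp_minus)
    have np: "real n > 0" using n by simp
    have dL: "real d + L > 0" using Lp by simp
    have a2n: "\<alpha>\<^sup>2 * real n \<ge> C * (real d + L)"
      using nC \<alpha>0 by (simp add: L_def field_simps)
    have an: "\<alpha> * real n \<ge> \<alpha>\<^sup>2 * real n"
      using \<alpha>0 \<alpha>1 np by (simp add: power2_eq_square mult_right_mono)
    have mge: "m \<ge> \<alpha> * real n" using cardG by (simp add: m_def G_def)
    have mC: "m \<ge> C * (real d + L)" using mge an a2n by linarith
    have md: "m \<ge> real d" and mL: "m \<ge> L" and m1: "m \<ge> 1"
    proof -
      have h0: "1 * (real d + L) \<le> C * (real d + L)" using Cge(3) dL by (intro mult_right_mono) auto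
      have h: "real d + L \<le> m" using order_trans[OF h0 mC] by simp
      show "m \<ge> real d" using h Lp by linarith
      show "m \<ge> L" using h Lp by linarith
      show "m \<ge> 1" using h Lp d by linarith
    qed
    define s1 where "s1 = sqrt (32 * (a1 + 1) * real n * (real d + L))"
    define s2 where "s2 = sqrt (32 * (2 * a2 + 2) * m)"
    define r where "r = sqrt (C' * (real d + L) / (\<alpha>\<^sup>2 * real n))"
    have s1p: "s1 \<ge> 0" and s1sq: "s1\<^sup>2 = 32 * (a1 + 1) * real n * (real d + L)"
      using a1 np dL by (auto simp: s1_def)
    have s2p: "s2 \<ge> 0" and s2sq: "s2\<^sup>2 = 32 * (2 * a2 + 2) * m"
      using a2 m1 by (auto simp: s2_def)
    have rp: "r > 0" using C'p dL \<alpha>0 np by (simp add: r_def)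
    have rsq: "r\<^sup>2 = C' * (real d + L) / (\<alpha>\<^sup>2 * real n)"
      using C'p dL \<alpha>0 np by (simp add: r_def)
    have K2: "(2 * s2)\<^sup>2 = \<kappa> * m" using s2sq by (simp add: \<kappa>_def power_mult_distrib)
    let ?M = "PiM ({..<n}\<times>{..<d}) (\<lambda>_. NG)"
    interpret P: prob_space ?M by (rule prob_PiNG)
    have GI: "G \<subseteq> {..<n}" by (auto simp: G_def)
    define B1 where "B1 = (\<Union>v\<in>gridnet {..<d} (1/2). {x\<in>space ?M. s1 \<le> (\<Sum>k\<in>{..<n}\<times>{..<d}. (psi (- \<eta> (fst k)) * v (snd k)) * x k)})"
    define B2 where "B2 = (\<Union>p\<in>gridnet G (1/6) \<times> gridnet {..<d} (1/6). {x\<in>space ?M. s2 \<le> (\<Sum>k\<in>{..<n}\<times>{..<d}. (fst p (fst k) * snd p (snd k)) * x k)})"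
    define B3 where "B3 = (\<Union>v\<in>{v\<in>gridnet {..<d} e3. 1/4 \<le> (\<Sum>j<d. (v j)\<^sup>2)}. {x\<in>space ?M.
      (\<Sum>i\<in>G. (if 1/20 \<le> \<bar>\<Sum>j<d. x (i,j) * v j\<bar> then 1 else (0::real))) \<le> (1/40) * card G / 4})"
    have E1: "B1 \<in> sets ?M" "measure ?M B1 \<le> exp (real d * ln (gA (1/2)) - s1\<^sup>2 / (32 * real n))"
      unfolding B1_def by (rule event1[OF n _ s1p], simp add: psi_bound)+
    have E2: "B2 \<in> sets ?M" "measure ?M B2 \<le> exp ((real (card G) + real d) * ln (gA (1/6)) - s2\<^sup>2 / 32)"
      unfolding B2_def by (rule event2[OF GI s2p])+
    have E3: "B3 \<in> sets ?M" "measure ?M B3 \<le> exp (real d * ln (gA e3) - real (card G) / 160)"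
      unfolding B3_def by (rule event3[OF GI n d e3p])+
    have P1: "measure ?M B1 \<le> \<delta> / 2"
    proof -
      have "real d * ln (gA (1/2)) - s1\<^sup>2 / (32 * real n) = - real d - a1 * L - L"
        using np by (simp add: s1sq a1_def field_simps)
      also have "\<dots> \<le> - L"
      proof -
        have "0 \<le> a1 * L" using a1 Lp by simp
        then show ?thesis by linarith
      qed
      finally have "exp (real d * ln (gA (1/2)) - s1\<^sup>2 / (32 * real n)) \<le> exp (- L)" by simp
      then show ?thesis using E1(2) eL by linarith
    qed
    have P2: "measure ?M B2 \<le> \<delta> / 4"
    proof -
      have "(real (card G) + real d) * ln (gA (1/6)) - s2\<^sup>2 / 32 = real d * a2 - m * a2 - 2 * m"
        by (simp add: s2sq a2_def m_def field_simps)
      also have "\<dots> \<le> - 2 * m" using md a2 by (simp add: mult_right_mono)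
      also have "\<dots> \<le> - L - ln 2" using mL m1 ln2 by linarith
      finally have "exp ((real (card G) + real d) * ln (gA (1/6)) - s2\<^sup>2 / 32) \<le> exp (- L - ln 2)" by simp
      then show ?thesis using E2(2) eL2 by linarith
    qed
    have P3: "measure ?M B3 \<le> \<delta> / 4"
    proof -
      have "160 * (a3 + 2) * (real d + L) \<le> m"
        using order_trans[OF mult_right_mono[OF Cge(2)] mC] dL by simp
      moreover have "a3 * real d + 2 * L \<le> (a3 + 2) * (real d + L)" using a3 Lp by (simp add: algebra_simps)
      ultimately have "real d * a3 - m / 160 \<le> - L - ln 2" using L2 by (simp add: algebra_simps)
      then have "exp (real d * ln (gA e3) - real (card G) / 160) \<le> exp (- L - ln 2)" by (simp add: a3_def m_def)
      then show ?thesis using E3(2) eL2 by linarith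
    qed
    define A where "A = space ?M - (B1 \<union> B2 \<union> B3)"
    have Bs: "B1 \<union> B2 \<union> B3 \<in> sets ?M" using E1(1) E2(1) E3(1) by auto
    have "measure ?M (B1 \<union> B2 \<union> B3) \<le> measure ?M B1 + measure ?M B2 + measure ?M B3"
      using measure_Un_le[of "B1 \<union> B2" ?M B3] measure_Un_le[of B1 ?M B2] E1(1) E2(1) E3(1) by auto
    then have PB: "measure ?M (B1 \<union> B2 \<union> B3) \<le> \<delta>" using P1 P2 P3 by linarith
    have Asets: "A \<in> sets ?M" unfolding A_def using Bs by auto
    have PA: "measure ?M A \<ge> 1 - \<delta>" unfolding A_def using P.prob_compl[OF Bs] PB by linarith
    show "\<exists>A \<in> sets (gauss_matrix n d).
         measure (gauss_matrix n d) A \<ge> 1 - \<delta> \<and>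
         (\<forall>X\<in>A. \<forall>\<beta>s::nat \<Rightarrow> real. \<forall>\<beta>h::nat \<Rightarrow> real.
            (let y = (\<lambda>i. (\<Sum>j<d. X (i, j) * \<beta>s j) + \<eta> i) in
              (\<forall>\<beta>. huber_loss n d X y \<beta>h \<le> huber_loss n d X y \<beta>) \<longrightarrow>
              (\<Sum>j<d. (\<beta>s j - \<beta>h j)\<^sup>2) \<le> C' * (real d + ln (2 / \<delta>)) / (\<alpha>\<^sup>2 * real n)))"
    proof (intro bexI[of _ A] conjI ballI allI)
      show "A \<in> sets (gauss_matrix n d)" using Asets by (simp add: gm_eq)
      show "measure (gauss_matrix n d) A \<ge> 1 - \<delta>" using PA by (simp add: gm_eq)
      fix X \<beta>s \<beta>h assume XA: "X \<in> A"
      have r2: "(2 * s2)\<^sup>2 * r\<^sup>2 \<le> m / 640"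
      proof -
        have "r\<^sup>2 \<le> C' / C"
        proof -
          have "C' * (real d + L) / (\<alpha>\<^sup>2 * real n) \<le> C' * (real d + L) / (C * (real d + L))"
            using a2n C'p dL Cp \<alpha>0 np by (intro divide_left_mono mult_pos_pos) auto
          then show ?thesis using dL by (simp add: rsq)
        qed
        also have "C' / C \<le> 1 / (640 * \<kappa>)"
          using Cge(1) \<kappa> C'p Cp by (simp add: field_simps)
        finally have "\<kappa> * r\<^sup>2 \<le> 1/640" using \<kappa> by (simp add: field_simps)
        then have "m * (\<kappa> * r\<^sup>2) \<le> m * (1/640)" using m1 by (intro mult_left_mono) auto
        then show ?thesis unfolding K2 by (simp add: algebra_simps)
      qed
      have r3: "2048000 * (2 * s1) < m * r"
      proof -
        have "(2048000 * (2 * s1))\<^sup>2 = 2048000\<^sup>2 * c1 * (real n * (real d + L))"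
          by (simp add: power_mult_distrib s1sq c1_def)
        also have "\<dots> < C' * (real n * (real d + L))"
          using c1 np dL by (simp add: C'_def)
        also have "C' * (real n * (real d + L)) = (\<alpha> * real n)\<^sup>2 * r\<^sup>2"
          unfolding rsq using \<alpha>0 np by (simp add: power2_eq_square field_simps)
        also have "\<dots> \<le> (m * r)\<^sup>2"
        proof -
          have "(\<alpha> * real n)\<^sup>2 \<le> m\<^sup>2" using mge \<alpha>0 np by (intro power_mono) auto
          then have "(\<alpha> * real n)\<^sup>2 * r\<^sup>2 \<le> m\<^sup>2 * r\<^sup>2" by (rule mult_right_mono) simp
          then show ?thesis by (simp add: power_mult_distrib)
        qed
        finally have "(2048000 * (2 * s1))\<^sup>2 < (m * r)\<^sup>2" .
        then show ?thesis using m1 rp by (meson power_less_imp_less_base less_imp_le mult_nonneg_nonneg zero_le_one order_trans)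
      qed
      have e3K: "1600 * (2 * s2)\<^sup>2 * e3\<^sup>2 \<le> real (card G) / 320"
      proof -
        have "1600 * (2 * s2)\<^sup>2 * e3\<^sup>2 = 1600 * m * (e3\<^sup>2 * \<kappa>)" unfolding K2 by (simp add: algebra_simps)
        also have "\<dots> = m / 625" by (simp add: e3sq)
        also have "\<dots> \<le> m / 320" using m1 by simp
        finally show ?thesis by (simp add: m_def)
      qed
      show "let y = (\<lambda>i. (\<Sum>j<d. X (i, j) * \<beta>s j) + \<eta> i) in
              (\<forall>\<beta>. huber_loss n d X y \<beta>h \<le> huber_loss n d X y \<beta>) \<longrightarrow>
              (\<Sum>j<d. (\<beta>s j - \<beta>h j)\<^sup>2) \<le> C' * (real d + ln (2 / \<delta>)) / (\<alpha>\<^sup>2 * real n)"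
        unfolding Let_def
      proof (intro impI)
        assume mn: "\<forall>\<beta>. huber_loss n d X (\<lambda>i. (\<Sum>j<d. X (i, j) * \<beta>s j) + \<eta> i) \<beta>h \<le> huber_loss n d X (\<lambda>i. (\<Sum>j<d. X (i, j) * \<beta>s j) + \<eta> i) \<beta>"
        have "(\<Sum>j<d. (\<beta>s j - \<beta>h j)\<^sup>2) \<le> r\<^sup>2"
        proof (rule main_det[OF n G_def s1p s2p e3p e3h e3K rp])
          show "(2 * s2)\<^sup>2 * r\<^sup>2 \<le> real (card G) / 640" using r2 by (simp add: m_def)
          show "2048000 * (2 * s1) < real (card G) * r" using r3 by (simp add: m_def)
        qed (use XA mn in \<open>auto simp: A_def B1_def B2_def B3_def\<close>)
        then show "(\<Sum>j<d. (\<beta>s j - \<beta>h j)\<^sup>2) \<le> C' * (real d + ln (2 / \<delta>)) / (\<alpha>\<^sup>2 * real n)"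
          by (simp add: rsq L_def)
      qed
    qed
  qed
qed

end
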